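(* For every $f\in L^1(\mathbb R^3\times\mathbb R^3,\,dx\otimes\sigma(v)\,dv)$ (the gain operator acting in the velocity variable, $x$ being a parameter) one has, for a.e. $(x,v)$, $$Q^+f(x,v)=\frac{1}{2\epsilon^2\gamma^2}\int_{\mathbb R^3} k(v,v')\,f(x,v')\,dv',$$ where $$k(v,v')=\Big(\frac{m_1}{2\pi\vartheta_1}\Big)^{1/2}|v-v'|^{-1}\exp\Big\{-\frac{m_1}{8\vartheta_1}\Big((1+\mu)|v-v'|+\frac{|v-u_1|^2-|v'-u_1|^2}{|v-v'|}\Big)^2\Big\}.$$
   Context: Fix masses $m,m_1>0$, a constant restitution coefficient $\epsilon\in(0,1)$, a bulk velocity $u_1\in\mathbb R^3$ and a temperature $\vartheta_1>0$. Let $\mathcal M_1(v)=\big(\frac{m_1}{2\pi\vartheta_1}\big)^{3/2}\exp\big(-\frac{m_1|v-u_1|^2}{2\vartheta_1}\big)$. Set $\alpha=\frac{m_1}{m+m_1}$, $\beta=\frac{1-\epsilon}{2}$, $\gamma=\alpha\frac{1-\beta}{1-2\beta}$, $\bar\gamma=(1-\alpha)\frac{1-\beta}{1-2\beta}$ and $\mu=\frac{1-2\alpha(1-\beta)}{\alpha(1-\beta)}$ (note $1+\mu>0$). For $v,w\in\mathbb R^3$, $n\in\mathbb S^2$ and $q=v-w$, let $v_\star=v-2\gamma(q\cdot n)n$, $w_\star=w+2\bar\gamma(q\cdot n)n$. The gain operator is $Q^+f(v)=\epsilon^{-2}\int_{\mathbb R^3\times\mathbb S^2}|q\cdot n|\,f(v_\star)\mathcal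 M_1(w_\star)\,dw\,dn$ ($dn$ the surface measure on $\mathbb S^2$), and the collision frequency is $\sigma(v)=\int_{\mathbb R^3\times\mathbb S^2}|q\cdot n|\,\mathcal M_1(w)\,dw\,dn$. *)

theory Defs
  imports "HOL-Analysis.Analysis"
begin

type_synonym vec3 = "real ^ 3"

text \<open>Surface measure on the unit sphere S^2, defined via the cone measure:
  the surface measure of A \<subseteq> S^2 is 3 times the Lebesgue measure of the cone
  {r n | 0 < r \<le> 1, n \<in> A}.  Total mass is 4 pi.\<close>
definition sphere_measure :: "vec3 measure" where
  "sphere_measure =
     density (distr (restrict_space lborel (cball 0 1 - {0}))
                    (restrict_space borel (sphere 0 1))
                    (\<lambda>y. y /\<^sub>R norm y))
             (\<lambda>_. 3)"

definition Maxw1 :: "real \<Rightarrow> real \<Rightarrow> vec3 \<Rightarrow> vec3 \<Rightarrow> real" where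
  "Maxw1 m1 th1 u1 v =
     (m1 / (2 * pi * th1)) powr (3/2) * exp (- (m1 * (norm (v - u1))\<^sup>2) / (2 * th1))"

definition alpha_c :: "real \<Rightarrow> real \<Rightarrow> real" where
  "alpha_c m m1 = m1 / (m + m1)"

definition beta_c :: "real \<Rightarrow> real" where
  "beta_c eps = (1 - eps) / 2"

definition gamma_c :: "real \<Rightarrow> real \<Rightarrow> real \<Rightarrow> real" where
  "gamma_c m m1 eps = alpha_c m m1 * (1 - beta_c eps) / (1 - 2 * beta_c eps)"

definition gammabar_c :: "real \<Rightarrow> real \<Rightarrow> real \<Rightarrow> real" where
  "gammabar_c m m1 eps = (1 - alpha_c m m1) * (1 - beta_c eps) / (1 - 2 * beta_c eps)"

definition mu_c :: "real \<Rightarrow> real \<Rightarrow> real \<Rightarrow> real" where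
  "mu_c m m1 eps = (1 - 2 * alpha_c m m1 * (1 - beta_c eps)) / (alpha_c m m1 * (1 - beta_c eps))"

definition vstar :: "real \<Rightarrow> real \<Rightarrow> real \<Rightarrow> vec3 \<Rightarrow> vec3 \<Rightarrow> vec3 \<Rightarrow> vec3" where
  "vstar m m1 eps v w n = v - (2 * gamma_c m m1 eps * ((v - w) \<bullet> n)) *\<^sub>R n"

definition wstar :: "real \<Rightarrow> real \<Rightarrow> real \<Rightarrow> vec3 \<Rightarrow> vec3 \<Rightarrow> vec3 \<Rightarrow> vec3" where
  "wstar m m1 eps v w n = w + (2 * gammabar_c m m1 eps * ((v - w) \<bullet> n)) *\<^sub>R n"

definition coll_freq :: "real \<Rightarrow> real \<Rightarrow> vec3 \<Rightarrow> vec3 \<Rightarrow> real" where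
  "coll_freq m1 th1 u1 v =
     (\<integral>p. \<bar>(v - fst p) \<bullet> snd p\<bar> * Maxw1 m1 th1 u1 (fst p) \<partial>(lborel \<Otimes>\<^sub>M sphere_measure))"

definition gain_integrand ::
  "real \<Rightarrow> real \<Rightarrow> real \<Rightarrow> real \<Rightarrow> vec3 \<Rightarrow> (vec3 \<times> vec3 \<Rightarrow> real) \<Rightarrow> vec3 \<Rightarrow> vec3 \<Rightarrow> vec3 \<times> vec3 \<Rightarrow> real" where
  "gain_integrand m m1 eps th1 u1 f x v p =
     \<bar>(v - fst p) \<bullet> snd p\<bar> * f (x, vstar m m1 eps v (fst p) (snd p))
       * Maxw1 m1 th1 u1 (wstar m m1 eps v (fst p) (snd p))"

definition Qplus ::
  "real \<Rightarrow> real \<Rightarrow> real \<Rightarrow> real \<Rightarrow> vec3 \<Rightarrow> (vec3 \<times> vec3 \<Rightarrow> real) \<Rightarrow> vec3 \<Rightarrow> vec3 \<Rightarrow> real" where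
  "Qplus m m1 eps th1 u1 f x v =
     eps powr (-2) * (\<integral>p. gain_integrand m m1 eps th1 u1 f x v p \<partial>(lborel \<Otimes>\<^sub>M sphere_measure))"

definition kern :: "real \<Rightarrow> real \<Rightarrow> real \<Rightarrow> real \<Rightarrow> vec3 \<Rightarrow> vec3 \<Rightarrow> vec3 \<Rightarrow> real" where
  "kern m m1 eps th1 u1 v v' =
     sqrt (m1 / (2 * pi * th1)) * (1 / norm (v - v')) *
     exp (- (m1 / (8 * th1)) *
       ((1 + mu_c m m1 eps) * norm (v - v')
         + ((norm (v - u1))\<^sup>2 - (norm (v' - u1))\<^sup>2) / norm (v - v'))\<^sup>2)"

end

theory Submission
  imports Defs "HOL-Probability.Distributions" "HOL-Real_Asymp.Real_Asymp"
begin



lemma distr_orth_lborel: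
  fixes L :: "vec3 \<Rightarrow> vec3"
  assumes L: "orthogonal_transformation L"
  shows "distr lborel borel L = lborel"
proof (rule lborel_eqI[symmetric])
  have lin: "linear L" using L orthogonal_transformation_linear by blast
  have Lm[measurable]: "L \<in> borel_measurable borel"
    using lin by (intro borel_measurable_continuous_onI linear_continuous_on) (simp add: linear_conv_bounded_linear)
  obtain Li where Li: "orthogonal_transformation Li" "\<And>x. Li (L x) = x" "\<And>x. L (Li x) = x"
    using L orthogonal_transformation_inv orthogonal_transformation_bij
    by (metis bij_inv_eq_iff)
  fix l u :: vec3 assume le: "\<And>b. b \<in> Basis \<Longrightarrow> l \<bullet> b \<le> u \<bullet> b"
  have pre: "L -` box l u = Li ` box l u"
  proof (intro set_eqI iffI)
    fix x assume "x \<in> L -` box l u" then show "x \<in> Li ` box l u" using Li(2)[of x] by (metis image_eqI vimageD)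
  next
    fix x assume "x \<in> Li ` box l u" then show "x \<in> L -` box l u" using Li(3) by auto
  qed
  have "emeasure (distr lborel borel L) (box l u) = emeasure lborel (L -` box l u)"
    by (simp add: emeasure_distr)
  also have "\<dots> = emeasure lebesgue (L -` box l u)"
  proof -
    have B: "L -` box l u \<in> sets lborel" using measurable_sets_borel[OF Lm, of "box l u"] by simp
    then show ?thesis by (subst emeasure_completion) (auto intro: sets_completionI_sets)
  qed
  also have "\<dots> = emeasure lebesgue (Li ` box l u)" by (simp add: pre)
  also have "\<dots> = measure lebesgue (Li ` box l u)"
    using measurable_orthogonal_image[OF Li(1) lmeasurable_box[of l u]]
    by (intro emeasure_eq_measure2)
  also have "\<dots> = measure lebesgue (box l u)"
    using measure_orthogonal_image[OF Li(1) lmeasurable_box[of l u]] by (rule arg_cong)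
  also have "\<dots> = (\<Prod>b\<in>Basis. (u - l) \<bullet> b)"
    using le by (simp add: measure_completion[of "box l u" lborel] measure_lborel_box_eq)
  finally show "emeasure (distr lborel borel L) (box l u) = (\<Prod>b\<in>Basis. (u - l) \<bullet> b)" .
qed simp




definition phi3 :: "real \<times> real \<times> real \<Rightarrow> vec3" where
  "phi3 p = (\<chi> i. if i = 1 then fst p else if i = 2 then fst (snd p) else snd (snd p))"

lemma phi3_nth[simp]: "phi3 (a,b,c) $ 1 = a" "phi3 (a,b,c) $ 2 = b" "phi3 (a,b,c) $ 3 = c"
  by (simp_all add: phi3_def)

lemma phi3_meas[measurable]: "phi3 \<in> borel_measurable borel"
  unfolding phi3_def
proof (intro borel_measurable_continuous_onI continuous_on_vec_lambda allI)
  fix i :: 3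
  show "continuous_on UNIV (\<lambda>x::real\<times>real\<times>real. if i = 1 then fst x else if i = 2 then fst (snd x) else snd (snd x))"
    by (cases "i = 1"; cases "i = 2") (simp_all add: continuous_intros)
qed

lemma sets_lb3: "sets (lborel \<Otimes>\<^sub>M (lborel \<Otimes>\<^sub>M lborel)) = sets (borel :: (real \<times> real \<times> real) measure)"
proof -
  have "sets (lborel \<Otimes>\<^sub>M (lborel \<Otimes>\<^sub>M lborel)) = sets ((borel::real measure) \<Otimes>\<^sub>M ((borel::real measure) \<Otimes>\<^sub>M (borel::real measure)))"
    by (intro sets_pair_measure_cong sets_lborel)
  also have "\<dots> = sets borel" unfolding borel_prod ..
  finally show ?thesis .
qed

lemma phi3_meas'[measurable]: "phi3 \<in> borel_measurable (lborel \<Otimes>\<^sub>M (lborel \<Otimes>\<^sub>M lborel))"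
  using measurable_cong_sets[OF sets_lb3 refl] phi3_meas by blast

lemma prod_3: "prod f (UNIV::3 set) = f 1 * f 2 * f 3"
  unfolding UNIV_3 by (simp add: ac_simps)

lemma prod_Basis_vec3: "(\<Prod>b\<in>(Basis::vec3 set). f b) = f (axis 1 1) * f (axis 2 1) * f (axis 3 1)"
proof -
  have B: "(Basis::vec3 set) = (\<lambda>i. axis i 1) ` UNIV" by (auto simp: Basis_vec_def)
  have inj: "inj (\<lambda>i::3. axis i (1::real))" by (auto intro!: injI simp: axis_eq_axis)
  show ?thesis unfolding B prod.reindex[OF inj] prod_3 by (simp only: comp_def)
qed

lemma sf2: "sigma_finite_measure (lborel \<Otimes>\<^sub>M lborel :: (real \<times> real) measure)"
  by (simp add: lborel_prod sigma_finite_lborel)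

lemma distr_phi3: "distr (lborel \<Otimes>\<^sub>M (lborel \<Otimes>\<^sub>M lborel)) borel phi3 = lborel"
proof (rule lborel_eqI[symmetric])
  fix l u :: vec3 assume le: "\<And>b. b \<in> Basis \<Longrightarrow> l \<bullet> b \<le> u \<bullet> b"
  have pre: "phi3 -` box l u \<inter> space (lborel \<Otimes>\<^sub>M (lborel \<Otimes>\<^sub>M lborel)) =
     {l$1<..<u$1} \<times> ({l$2<..<u$2} \<times> {l$3<..<u$3})"
    by (auto simp: mem_box_cart forall_3 space_pair_measure)
  have le3: "l$1 \<le> u$1" "l$2 \<le> u$2" "l$3 \<le> u$3"
    using le[of "axis 1 1"] le[of "axis 2 1"] le[of "axis 3 1"]
    by (auto simp: Basis_vec_def inner_axis)
  have "emeasure (distr (lborel \<Otimes>\<^sub>M (lborel \<Otimes>\<^sub>M lborel)) borel phi3) (box l u)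
     = emeasure (lborel \<Otimes>\<^sub>M (lborel \<Otimes>\<^sub>M lborel)) ({l$1<..<u$1} \<times> ({l$2<..<u$2} \<times> {l$3<..<u$3}))"
    by (subst emeasure_distr) (auto simp: pre)
  also have "\<dots> = ennreal (u$1 - l$1) * (ennreal (u$2 - l$2) * ennreal (u$3 - l$3))"
    using le3 by (simp add: sigma_finite_measure.emeasure_pair_measure_Times[OF sf2] lborel.emeasure_pair_measure_Times)
  also have "\<dots> = ennreal ((u$1 - l$1) * ((u$2 - l$2) * (u$3 - l$3)))"
    using le3 by (simp add: ennreal_mult)
  also have "\<dots> = (\<Prod>b\<in>Basis. (u - l) \<bullet> b)"
    by (simp add: prod_Basis_vec3 inner_axis mult.assoc)
  finally show "emeasure (distr (lborel \<Otimes>\<^sub>M (lborel \<Otimes>\<^sub>M lborel)) borel phi3) (box l u) = (\<Prod>b\<in>Basis. (u - l) \<bullet> b)" .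
qed simp

lemma nn_integral_vec3:
  fixes f :: "vec3 \<Rightarrow> ennreal"
  assumes [measurable]: "f \<in> borel_measurable borel"
  shows "(\<integral>\<^sup>+x. f x \<partial>lborel) = (\<integral>\<^sup>+a. \<integral>\<^sup>+b. \<integral>\<^sup>+c. f (phi3 (a,b,c)) \<partial>lborel \<partial>lborel \<partial>lborel)"
proof -
  have "(\<integral>\<^sup>+x. f x \<partial>lborel) = (\<integral>\<^sup>+x. f x \<partial>distr (lborel \<Otimes>\<^sub>M (lborel \<Otimes>\<^sub>M lborel)) borel phi3)"
    by (simp add: distr_phi3)
  also have "\<dots> = (\<integral>\<^sup>+p. f (phi3 p) \<partial>(lborel \<Otimes>\<^sub>M (lborel \<Otimes>\<^sub>M lborel)))"
    by (subst nn_integral_distr) auto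
  also have "\<dots> = (\<integral>\<^sup>+a. \<integral>\<^sup>+q. f (phi3 (a,q)) \<partial>(lborel \<Otimes>\<^sub>M lborel) \<partial>lborel)"
    by (subst sigma_finite_measure.nn_integral_fst[OF sf2, symmetric]) auto
  also have "\<dots> = (\<integral>\<^sup>+a. \<integral>\<^sup>+b. \<integral>\<^sup>+c. f (phi3 (a,b,c)) \<partial>lborel \<partial>lborel \<partial>lborel)"
    by (intro nn_integral_cong, subst lborel.nn_integral_fst[symmetric]) auto
  finally show ?thesis .
qed




definition nd :: "real \<Rightarrow> real \<Rightarrow> real \<Rightarrow> real" where
  "nd m1 th1 t = normal_density 0 (sqrt (th1/m1)) t"

lemma nd_nonneg[simp]: "0 \<le> nd m1 th1 t" by (simp add: nd_def)

lemma nd_meas[measurable]: "nd m1 th1 \<in> borel_measurable borel"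
  unfolding nd_def by simp

lemma nd_alt: assumes "m1 > 0" "th1 > 0"
  shows "nd m1 th1 t = sqrt (m1 / (2*pi*th1)) * exp (- (m1 * t\<^sup>2) / (2*th1))"
  using assms by (simp add: nd_def normal_density_def real_sqrt_divide real_sqrt_mult field_simps)

lemma nd_sym: "nd m1 th1 (-t) = nd m1 th1 t"
  by (simp add: nd_def normal_density_def)

lemma nn_nd: assumes "m1 > 0" "th1 > 0"
  shows "(\<integral>\<^sup>+t. ennreal (nd m1 th1 (d - t)) \<partial>lborel) = 1"
proof -
  have s: "0 < sqrt (th1/m1)" using assms by simp
  have eq: "\<And>t. nd m1 th1 (d - t) = normal_density d (sqrt (th1/m1)) t"
    by (simp add: nd_def normal_density_def power2_commute)
  show ?thesis unfolding eq
    using integral_normal_density[OF s] integrable_normal_density[OF s]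
    by (subst nn_integral_eq_integral) auto
qed

lemma powr32: "(x::real) > 0 \<Longrightarrow> x powr (3/2) = sqrt x * sqrt x * sqrt x"
proof -
  assume x: "x > 0"
  have "x powr (3/2) = x powr (1/2 + 1/2 + 1/2)" by simp
  also have "\<dots> = x powr (1/2) * x powr (1/2) * x powr (1/2)" using x by (simp only: powr_add)
  finally show ?thesis using x by (simp add: powr_half_sqrt)
qed

lemma norm_sq_vec3: "(norm (z::vec3))\<^sup>2 = (z$1)\<^sup>2 + (z$2)\<^sup>2 + (z$3)\<^sup>2"
  unfolding power2_norm_eq_inner inner_vec_def sum_3 by (simp add: power2_eq_square)

lemma Maxw1_prod: assumes "m1 > 0" "th1 > 0"
  shows "Maxw1 m1 th1 u1 w = nd m1 th1 ((w-u1)$1) * nd m1 th1 ((w-u1)$2) * nd m1 th1 ((w-u1)$3)"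
proof -
  define C where "C = sqrt (m1 / (2*pi*th1))"
  have e: "exp (- (m1 * (norm (w - u1))\<^sup>2) / (2 * th1)) =
     exp (- (m1 * ((w-u1)$1)\<^sup>2) / (2*th1)) * exp (- (m1 * ((w-u1)$2)\<^sup>2) / (2*th1)) * exp (- (m1 * ((w-u1)$3)\<^sup>2) / (2*th1))"
  proof -
    have "- (m1 * (norm (w - u1))\<^sup>2) / (2 * th1) = - (m1 * ((w-u1)$1)\<^sup>2) / (2*th1) + - (m1 * ((w-u1)$2)\<^sup>2) / (2*th1) + - (m1 * ((w-u1)$3)\<^sup>2) / (2*th1)"
      unfolding norm_sq_vec3 using assms by (simp add: field_simps)
    then show ?thesis by (simp add: exp_add[symmetric])
  qed
  have p: "(m1 / (2 * pi * th1)) powr (3/2) = C * C * C"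
    unfolding C_def using assms by (intro powr32) simp
  show ?thesis unfolding Maxw1_def nd_alt[OF assms] e p C_def[symmetric] by (simp only: mult_ac)
qed

lemma Maxw1_nonneg[simp]: "0 \<le> Maxw1 m1 th1 u1 w"
  by (simp add: Maxw1_def)

lemma Maxw1_meas[measurable]: "Maxw1 m1 th1 u1 \<in> borel_measurable borel"
  unfolding Maxw1_def[abs_def] by measurable

lemma lemmaA:
  fixes G :: "real \<Rightarrow> ennreal" and n b :: vec3 and c :: real
  assumes m1: "m1 > 0" and th1: "th1 > 0" and n: "norm n = 1"
    and G[measurable]: "G \<in> borel_measurable borel"
  shows "(\<integral>\<^sup>+q. G (q \<bullet> n) * ennreal (Maxw1 m1 th1 u1 (b - q + (c * (q \<bullet> n)) *\<^sub>R n)) \<partial>lborel)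
       = (\<integral>\<^sup>+s. G s * ennreal (nd m1 th1 ((b - u1) \<bullet> n + (c - 1) * s)) \<partial>lborel)"
proof -
  define e1 :: vec3 where "e1 = axis 1 1"
  have ne1: "norm e1 = norm n" using n by (simp add: e1_def)
  obtain L where L: "orthogonal_transformation L" "L e1 = n"
    using orthogonal_transformation_exists[OF ne1] by blast
  have linL: "linear L" using L(1) orthogonal_transformation_linear by blast
  have Lm[measurable]: "L \<in> borel_measurable borel"
    using linL by (intro borel_measurable_continuous_onI linear_continuous_on) (simp add: linear_conv_bounded_linear)
  have Linner: "\<And>x y. L x \<bullet> L y = x \<bullet> y" using L(1) by (simp add: orthogonal_transformation_def)
  have Lnorm: "\<And>x. norm (L x) = norm x" using L(1) by (simp add: orthogonal_transformation_norm)
  obtain Li where Li: "orthogonal_transformation Li" "\<And>x. L (Li x) = x"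
    using L(1) orthogonal_transformation_inv orthogonal_transformation_bij
    by (metis bij_inv_eq_iff)
  define d where "d = Li (b - u1)"
  have d1: "d $ 1 = (b - u1) \<bullet> n"
  proof -
    have "d $ 1 = d \<bullet> e1" by (simp add: e1_def cart_eq_inner_axis)
    also have "\<dots> = L d \<bullet> L e1" by (simp add: Linner)
    finally show ?thesis by (simp add: d_def Li(2) L(2))
  qed
  define F where "F q = G (q \<bullet> n) * ennreal (Maxw1 m1 th1 u1 (b - q + (c * (q \<bullet> n)) *\<^sub>R n))" for q
  have Fm[measurable]: "F \<in> borel_measurable borel" unfolding F_def by measurable
  have FL: "F (L y) = G (y$1) * ennreal (nd m1 th1 (d$1 + (c - 1) * y$1) * nd m1 th1 (d$2 - y$2) * nd m1 th1 (d$3 - y$3))" for y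
  proof -
    have i1: "L y \<bullet> n = y $ 1"
      by (simp add: L(2)[symmetric] Linner e1_def cart_eq_inner_axis)
    have "b - L y + (c * y$1) *\<^sub>R n - u1 = L (d - y + (c * y$1) *\<^sub>R e1)"
      using linL by (simp add: d_def Li(2) L(2) linear_diff linear_add linear_scale)
    then have "Maxw1 m1 th1 u1 (b - L y + (c * y$1) *\<^sub>R n) = Maxw1 m1 th1 0 (d - y + (c * y$1) *\<^sub>R e1)"
      by (simp add: Maxw1_def Lnorm)
    also have "\<dots> = nd m1 th1 (d$1 + (c - 1) * y$1) * nd m1 th1 (d$2 - y$2) * nd m1 th1 (d$3 - y$3)"
      by (simp add: Maxw1_prod[OF m1 th1] e1_def axis_def algebra_simps)
    finally show ?thesis by (simp add: F_def i1)
  qed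
  have "(\<integral>\<^sup>+q. F q \<partial>lborel) = (\<integral>\<^sup>+q. F q \<partial>distr lborel borel L)"
    by (simp add: distr_orth_lborel[OF L(1)])
  also have "\<dots> = (\<integral>\<^sup>+y. F (L y) \<partial>lborel)"
    by (subst nn_integral_distr) auto
  also have "\<dots> = (\<integral>\<^sup>+a. \<integral>\<^sup>+b'. \<integral>\<^sup>+c'. F (L (phi3 (a,b',c'))) \<partial>lborel \<partial>lborel \<partial>lborel)"
    by (rule nn_integral_vec3) measurable
  also have "\<dots> = (\<integral>\<^sup>+a. \<integral>\<^sup>+b'. \<integral>\<^sup>+c'. (G a * ennreal (nd m1 th1 (d$1 + (c - 1) * a)) * ennreal (nd m1 th1 (d$2 - b'))) * ennreal (nd m1 th1 (d$3 - c')) \<partial>lborel \<partial>lborel \<partial>lborel)"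
    unfolding FL by (simp add: ennreal_mult' mult.assoc)
  also have "\<dots> = (\<integral>\<^sup>+a. \<integral>\<^sup>+b'. (G a * ennreal (nd m1 th1 (d$1 + (c - 1) * a)) * ennreal (nd m1 th1 (d$2 - b'))) \<partial>lborel \<partial>lborel)"
    by (simp add: nn_integral_cmult nn_nd[OF m1 th1])
  also have "\<dots> = (\<integral>\<^sup>+a. G a * ennreal (nd m1 th1 (d$1 + (c - 1) * a)) \<partial>lborel)"
    by (simp add: nn_integral_cmult nn_nd[OF m1 th1])
  finally show ?thesis unfolding F_def d1 by simp
qed




lemma sets_sph: "sets sphere_measure = sets (restrict_space borel (sphere (0::vec3) 1))"
  by (simp add: sphere_measure_def)

lemma space_sph: "space sphere_measure = sphere (0::vec3) 1"
  by (simp add: sphere_measure_def space_restrict_space)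

lemma sph_id: "(\<lambda>x. x) \<in> sphere_measure \<rightarrow>\<^sub>M (borel :: vec3 measure)"
  using measurable_cong_sets[OF sets_sph refl] measurable_restrict_space1[OF measurable_ident_sets[OF refl]]
  by blast

lemma sph_snd[measurable]: "snd \<in> (M \<Otimes>\<^sub>M sphere_measure) \<rightarrow>\<^sub>M (borel :: vec3 measure)"
  using measurable_compose[OF measurable_snd[of M sphere_measure] sph_id] by simp

lemma Tsph_meas: "(\<lambda>y::vec3. y /\<^sub>R norm y) \<in> restrict_space lborel (cball 0 1 - {0}) \<rightarrow>\<^sub>M restrict_space borel (sphere 0 1)"
proof (rule measurable_restrict_space2)
  show "(\<lambda>y::vec3. y /\<^sub>R norm y) \<in> space (restrict_space lborel (cball 0 1 - {0})) \<rightarrow> sphere 0 1"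
    by (auto simp: space_restrict_space)
  show "(\<lambda>y::vec3. y /\<^sub>R norm y) \<in> restrict_space lborel (cball 0 1 - {0}) \<rightarrow>\<^sub>M borel"
    by (rule measurable_restrict_space1) simp
qed

lemma cb_meas[measurable]: "cball (0::vec3) 1 - {0} \<in> sets borel"
  by (intro sets.Diff borel_closed) auto

lemma nn_integral_sph:
  fixes F :: "vec3 \<Rightarrow> ennreal"
  assumes F[measurable]: "F \<in> borel_measurable borel"
  shows "(\<integral>\<^sup>+n. F n \<partial>sphere_measure) = 3 * (\<integral>\<^sup>+y. F (y /\<^sub>R norm y) * indicator (cball 0 1 - {0}) y \<partial>lborel)"
proof -
  let ?D = "distr (restrict_space lborel (cball (0::vec3) 1 - {0})) (restrict_space borel (sphere 0 1)) (\<lambda>y. y /\<^sub>R norm y)"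
  have Fm: "F \<in> borel_measurable ?D"
    using measurable_restrict_space1[OF F] by simp
  have "(\<integral>\<^sup>+n. F n \<partial>sphere_measure) = (\<integral>\<^sup>+n. 3 * F n \<partial>?D)"
    unfolding sphere_measure_def by (subst nn_integral_density) (auto simp: Fm measurable_restrict_space1[OF F])
  also have "\<dots> = (\<integral>\<^sup>+y. 3 * F (y /\<^sub>R norm y) \<partial>restrict_space lborel (cball 0 1 - {0}))"
    by (subst nn_integral_distr[OF Tsph_meas]) (auto simp: measurable_restrict_space1)
  also have "\<dots> = (\<integral>\<^sup>+y. 3 * F (y /\<^sub>R norm y) * indicator (cball 0 1 - {0}) y \<partial>lborel)"
    by (subst nn_integral_restrict_space) auto
  also have "\<dots> = 3 * (\<integral>\<^sup>+y. F (y /\<^sub>R norm y) * indicator (cball 0 1 - {0}) y \<partial>lborel)"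
    by (subst nn_integral_cmult[symmetric]) (auto simp: mult.assoc)
  finally show ?thesis .
qed

lemma finite_sph: "finite_measure sphere_measure"
proof (rule finite_measureI)
  have "emeasure sphere_measure (space sphere_measure) = (\<integral>\<^sup>+n. 1 \<partial>sphere_measure)"
    by simp
  also have "\<dots> = 3 * (\<integral>\<^sup>+y. indicator (cball (0::vec3) 1 - {0}) y \<partial>lborel)"
    by (subst nn_integral_sph) auto
  also have "\<dots> = 3 * emeasure lborel (cball (0::vec3) 1 - {0})"
    by (rule arg_cong[where f="\<lambda>x. 3 * x"], rule nn_integral_indicator) auto
  also have "\<dots> < \<infinity>"
    using emeasure_bounded_finite[of "cball (0::vec3) 1 - {0}"] bounded_subset[OF bounded_cball, of "cball (0::vec3) 1 - {0}" 0 1]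
    by (simp add: ennreal_mult_less_top)
  finally show "emeasure sphere_measure (space sphere_measure) \<noteq> \<infinity>" by simp
qed

interpretation sph: finite_measure sphere_measure by (rule finite_sph)

interpretation lsph: pair_sigma_finite "lborel :: vec3 measure" sphere_measure
  by (intro pair_sigma_finite.intro sigma_finite_lborel sph.sigma_finite_measure_axioms)






lemma int_t4_pos: assumes r: "r > 0"
  shows "(\<integral>\<^sup>+t. ennreal (1 / t^4) * indicator {r..} t \<partial>lborel) = ennreal (1 / (3 * r^3))"
proof -
  have "(\<integral>\<^sup>+t. ennreal (1 / t^4) * indicator {r..} t \<partial>lborel) = ennreal (0 - (- 1 / (3 * r^3)))"
  proof (rule nn_integral_FTC_atLeast)
    show "(\<lambda>t::real. 1 / t^4) \<in> borel_measurable borel" by measurable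
    fix x :: real assume x: "r \<le> x"
    then have x0: "x \<noteq> 0" using r by auto
    show "((\<lambda>t. - 1 / (3 * t^3)) has_real_derivative 1 / x^4) (at x)"
      using x0 by (auto intro!: derivative_eq_intros simp: field_simps power_eq_if)
    show "0 \<le> 1 / x^4" by simp
  next
    show "((\<lambda>t::real. - 1 / (3 * t^3)) \<longlongrightarrow> 0) at_top" by real_asymp
  qed
  then show ?thesis by simp
qed

lemma int_t4: assumes r: "r > 0"
  shows "(\<integral>\<^sup>+t. ennreal (1 / t^4) * indicator {t. r \<le> \<bar>t\<bar>} t \<partial>lborel) = ennreal (2 / (3 * r^3))"
proof -
  have split: "ennreal (1 / t^4) * indicator {t. r \<le> \<bar>t\<bar>} t =
      ennreal (1 / t^4) * indicator {r..} t + ennreal (1 / t^4) * indicator {..-r} t" for t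
    using r by (auto split: split_indicator)
  have neg: "(\<integral>\<^sup>+t. ennreal (1 / t^4) * indicator {..-r} t \<partial>lborel) = ennreal (1 / (3 * r^3))"
  proof -
    have "(\<integral>\<^sup>+t. ennreal (1 / t^4) * indicator {..-r} t \<partial>lborel)
        = ennreal \<bar>-1\<bar> * (\<integral>\<^sup>+t. ennreal (1 / (0 + -1 * t)^4) * indicator {..-r} (0 + -1 * t) \<partial>lborel)"
      by (rule nn_integral_real_affine) auto
    also have "\<dots> = (\<integral>\<^sup>+t. ennreal (1 / t^4) * indicator {r..} t \<partial>lborel)"
      by (simp only: abs_neg_one ennreal_1 mult_1, intro nn_integral_cong) (auto split: split_indicator)
    finally show ?thesis using int_t4_pos[OF r] by simp
  qed
  have "(\<integral>\<^sup>+t. ennreal (1 / t^4) * indicator {t. r \<le> \<bar>t\<bar>} t \<partial>lborel)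
     = (\<integral>\<^sup>+t. ennreal (1 / t^4) * indicator {r..} t \<partial>lborel) + (\<integral>\<^sup>+t. ennreal (1 / t^4) * indicator {..-r} t \<partial>lborel)"
    unfolding split by (rule nn_integral_add) auto
  also have "\<dots> = ennreal (2 / (3 * r^3))"
    using r by (simp add: int_t4_pos neg ennreal_plus[symmetric] del: ennreal_plus)
  finally show ?thesis .
qed




lemma ps_vr: "pair_sigma_finite (lborel::vec3 measure) (lborel::real measure)"
  by (intro pair_sigma_finite.intro sigma_finite_lborel)

lemma lemmaB:
  fixes H :: "vec3 \<Rightarrow> ennreal"
  assumes H[measurable]: "H \<in> borel_measurable borel"
  shows "(\<integral>\<^sup>+n. (\<integral>\<^sup>+s. ennreal \<bar>s\<bar> * H (s *\<^sub>R n) \<partial>lborel) \<partial>sphere_measure)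
       = 2 * (\<integral>\<^sup>+u. ennreal (1 / norm u) * H u \<partial>lborel)"
proof -
  define B0 where "B0 = cball (0::vec3) 1 - {0}"
  have B0m[measurable]: "B0 \<in> sets borel" unfolding B0_def by measurable
  define K where "K t u = ennreal (if u \<noteq> 0 \<and> norm u \<le> \<bar>t\<bar> then (norm u)^2 / t^4 else 0)" for t :: real and u :: vec3
  have step1: "(\<integral>\<^sup>+n. (\<integral>\<^sup>+s. ennreal \<bar>s\<bar> * H (s *\<^sub>R n) \<partial>lborel) \<partial>sphere_measure)
     = 3 * (\<integral>\<^sup>+y. (\<integral>\<^sup>+s. ennreal \<bar>s\<bar> * H (s *\<^sub>R (y /\<^sub>R norm y)) \<partial>lborel) * indicator B0 y \<partial>lborel)"
    unfolding B0_def by (rule nn_integral_sph) measurable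
  have step2: "(\<integral>\<^sup>+s. ennreal \<bar>s\<bar> * H (s *\<^sub>R (y /\<^sub>R norm y)) \<partial>lborel) * indicator B0 y
     = (\<integral>\<^sup>+t. ennreal ((norm y)^2) * indicator B0 y * ennreal \<bar>t\<bar> * H (t *\<^sub>R y) \<partial>lborel)" for y
  proof (cases "y \<in> B0")
    case False then show ?thesis by simp
  next
    case True
    then have y0: "norm y \<noteq> 0" unfolding B0_def by auto
    have "(\<integral>\<^sup>+s. ennreal \<bar>s\<bar> * H (s *\<^sub>R (y /\<^sub>R norm y)) \<partial>lborel)
        = ennreal \<bar>norm y\<bar> * (\<integral>\<^sup>+t. ennreal \<bar>0 + norm y * t\<bar> * H ((0 + norm y * t) *\<^sub>R (y /\<^sub>R norm y)) \<partial>lborel)"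
      using y0 by (intro nn_integral_real_affine) auto
    also have "\<dots> = ennreal (norm y) * (\<integral>\<^sup>+t. ennreal (norm y) * (ennreal \<bar>t\<bar> * H (t *\<^sub>R y)) \<partial>lborel)"
    proof -
      have e: "\<And>t. (0 + norm y * t) *\<^sub>R (y /\<^sub>R norm y) = t *\<^sub>R y" using y0 by simp
      show ?thesis unfolding e using y0 by (simp add: abs_mult ennreal_mult mult.assoc)
    qed
    also have "\<dots> = ennreal ((norm y)^2) * (\<integral>\<^sup>+t. ennreal \<bar>t\<bar> * H (t *\<^sub>R y) \<partial>lborel)"
      by (simp add: nn_integral_cmult power2_eq_square ennreal_mult mult.assoc)
    finally show ?thesis using True
      by (simp add: nn_integral_cmult[symmetric] mult.assoc)
  qed
  have step4: "(\<integral>\<^sup>+y. ennreal ((norm y)^2) * indicator B0 y * ennreal \<bar>t\<bar> * H (t *\<^sub>R y) \<partial>lborel)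
     = (\<integral>\<^sup>+u. K t u * H u \<partial>lborel)" for t
  proof (cases "t = 0")
    case True then show ?thesis by (simp add: K_def)
  next
    case False
    have "(\<integral>\<^sup>+y. ennreal ((norm y)^2) * indicator B0 y * ennreal \<bar>t\<bar> * H (t *\<^sub>R y) \<partial>lborel)
       = (\<integral>\<^sup>+y. ennreal ((norm y)^2) * indicator B0 y * ennreal \<bar>t\<bar> * H (t *\<^sub>R y)
           \<partial>density (distr lborel borel (\<lambda>x. 0 + (1/t) *\<^sub>R x)) (\<lambda>_. \<bar>1/t\<bar> ^ DIM(vec3)))"
      using lborel_affine[of "1/t" "0::vec3"] False by simp
    also have "\<dots> = (\<integral>\<^sup>+u. ennreal (\<bar>1/t\<bar> ^ 3) * (ennreal ((norm ((1/t) *\<^sub>R u))^2) * indicator B0 ((1/t) *\<^sub>R u) * ennreal \<bar>t\<bar> * H (t *\<^sub>R ((1/t) *\<^sub>R u))) \<partial>lborel)"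
      by (subst nn_integral_density) (auto simp: nn_integral_distr)
    also have "\<dots> = (\<integral>\<^sup>+u. K t u * H u \<partial>lborel)"
    proof (intro nn_integral_cong)
      fix u :: vec3
      have ind: "indicator B0 ((1/t) *\<^sub>R u) = (if u \<noteq> 0 \<and> norm u \<le> \<bar>t\<bar> then 1 else (0::ennreal))"
        using False by (auto simp: B0_def split: split_indicator simp: field_simps)
      have val: "\<bar>1/t\<bar> ^ 3 * ((norm ((1/t) *\<^sub>R u))^2 * \<bar>t\<bar>) = (norm u)^2 / t^4"
        using False by (simp add: power_divide field_simps power2_eq_square power_eq_if abs_mult_self_eq)
      show "ennreal (\<bar>1/t\<bar> ^ 3) * (ennreal ((norm ((1/t) *\<^sub>R u))^2) * indicator B0 ((1/t) *\<^sub>R u) * ennreal \<bar>t\<bar> * H (t *\<^sub>R ((1/t) *\<^sub>R u))) = K t u * H u"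
        using False unfolding ind K_def
        by (auto simp: val[symmetric] ennreal_mult mult.assoc)
    qed
    finally show ?thesis .
  qed
  have step6: "(\<integral>\<^sup>+t. K t u \<partial>lborel) = ennreal (2 / (3 * norm u))" for u
  proof (cases "u = 0")
    case True then show ?thesis by (simp add: K_def)
  next
    case False
    then have r: "norm u > 0" by simp
    have "(\<integral>\<^sup>+t. K t u \<partial>lborel) = (\<integral>\<^sup>+t. ennreal ((norm u)^2) * (ennreal (1 / t^4) * indicator {t. norm u \<le> \<bar>t\<bar>} t) \<partial>lborel)"
      using False by (intro nn_integral_cong) (auto simp: K_def ennreal_mult[symmetric] split: split_indicator)
    also have "\<dots> = ennreal ((norm u)^2) * ennreal (2 / (3 * (norm u)^3))"
      using int_t4[OF r] by (simp add: nn_integral_cmult)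
    also have "\<dots> = ennreal (2 / (3 * norm u))"
      using r by (simp add: ennreal_mult[symmetric] power_eq_if field_simps)
    finally show ?thesis .
  qed
  have "(\<integral>\<^sup>+n. (\<integral>\<^sup>+s. ennreal \<bar>s\<bar> * H (s *\<^sub>R n) \<partial>lborel) \<partial>sphere_measure)
     = 3 * (\<integral>\<^sup>+y. (\<integral>\<^sup>+t. ennreal ((norm y)^2) * indicator B0 y * ennreal \<bar>t\<bar> * H (t *\<^sub>R y) \<partial>lborel) \<partial>lborel)"
    unfolding step1 step2 ..
  also have "\<dots> = 3 * (\<integral>\<^sup>+t. (\<integral>\<^sup>+y. ennreal ((norm y)^2) * indicator B0 y * ennreal \<bar>t\<bar> * H (t *\<^sub>R y) \<partial>lborel) \<partial>lborel)"
    by (subst pair_sigma_finite.Fubini'[OF ps_vr]) (auto)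
  also have "\<dots> = 3 * (\<integral>\<^sup>+t. (\<integral>\<^sup>+u. K t u * H u \<partial>lborel) \<partial>lborel)"
    unfolding step4 ..
  also have "\<dots> = 3 * (\<integral>\<^sup>+u. (\<integral>\<^sup>+t. K t u * H u \<partial>lborel) \<partial>lborel)"
  proof -
    have Km: "(\<lambda>(u, t). K t u * H u) \<in> borel_measurable ((lborel::vec3 measure) \<Otimes>\<^sub>M (lborel::real measure))"
      unfolding K_def by measurable
    show ?thesis by (subst pair_sigma_finite.Fubini'[OF ps_vr, symmetric]) (auto simp: Km)
  qed
  also have "\<dots> = 3 * (\<integral>\<^sup>+u. ennreal (2 / (3 * norm u)) * H u \<partial>lborel)"
  proof -
    have "(\<integral>\<^sup>+t. K t u * H u \<partial>lborel) = ennreal (2 / (3 * norm u)) * H u" for u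
    proof -
      have [measurable]: "(\<lambda>t. K t u) \<in> borel_measurable lborel" unfolding K_def by measurable
      show ?thesis by (subst nn_integral_multc) (auto simp: step6)
    qed
    then show ?thesis by simp
  qed
  also have "\<dots> = 2 * (\<integral>\<^sup>+u. ennreal (1 / norm u) * H u \<partial>lborel)"
  proof -
    have e: "\<And>u::vec3. ennreal (2 / (3 * norm u)) * H u = ennreal (2/3) * (ennreal (1 / norm u) * H u)"
      by (simp add: ennreal_mult'[symmetric] mult.assoc[symmetric])
    have c: "(3::ennreal) * ennreal (2/3) = 2"
      by (metis ennreal_mult' ennreal_numeral times_divide_eq_right nonzero_mult_div_cancel_left zero_le_numeral
           mult_2_right numeral_Bit0 numeral_One divide_self_if zero_neq_numeral)
    have "3 * (\<integral>\<^sup>+u. ennreal (2 / (3 * norm u)) * H u \<partial>lborel) = 3 * (ennreal (2/3) * (\<integral>\<^sup>+u. ennreal (1 / norm u) * H u \<partial>lborel))"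
      unfolding e by (subst nn_integral_cmult) auto
    also have "\<dots> = 2 * (\<integral>\<^sup>+u. ennreal (1 / norm u) * H u \<partial>lborel)"
      by (simp only: mult.assoc[symmetric] c)
    finally show ?thesis .
  qed
  finally show ?thesis .
qed




lemma mu_alg:
  fixes A P E :: real
  assumes "A \<noteq> 0" "P \<noteq> 0" "E \<noteq> 0" "2*P - E = 1"
  shows "(1 - 2*A*P)/(A*P) = (2*((1-A)*P/E) - 1)/(A*P/E)"
proof -
  have e1: "2*((1-A)*P/E) - 1 = (2*(1-A)*P - E)/E" using assms by (simp add: field_simps)
  have e2: "2*(1-A)*P - E = 1 - 2*A*P" using assms(4) by (simp add: algebra_simps)
  show ?thesis unfolding e1 e2 using assms by (simp add: field_simps)
qed
lemma g_alg:
  fixes A P E :: real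
  assumes "E \<noteq> 0" "2*P - E = 1"
  shows "2 * (A*P/E) + 2 * ((1-A)*P/E) - 1 = 1 / E"
proof -
  have "2 * (A*P/E) + 2 * ((1-A)*P/E) - 1 = (2*P - E)/E" using assms by (simp add: field_simps)
  then show ?thesis using assms by simp
qed

lemma params:
  assumes "m > 0" "m1 > 0" "0 < eps" "eps < 1"
  shows "gamma_c m m1 eps > 0"
    and "mu_c m m1 eps = (2 * gammabar_c m m1 eps - 1) / gamma_c m m1 eps"
    and "2 * gamma_c m m1 eps + 2 * gammabar_c m m1 eps - 1 = 1 / eps"
proof -
  have a: "0 < alpha_c m m1" "alpha_c m m1 < 1" using assms by (auto simp: alpha_c_def field_simps)
  have b: "1 - beta_c eps > 0" "1 - 2 * beta_c eps = eps" using assms by (auto simp: beta_c_def field_simps)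
  show "gamma_c m m1 eps > 0" using a b assms by (simp add: gamma_c_def)
  show "mu_c m m1 eps = (2 * gammabar_c m m1 eps - 1) / gamma_c m m1 eps"
    unfolding mu_c_def gammabar_c_def gamma_c_def
    by (rule mu_alg) (use a b assms in \<open>auto simp: beta_c_def\<close>)
  show "2 * gamma_c m m1 eps + 2 * gammabar_c m m1 eps - 1 = 1 / eps"
  proof -
    have "2 * gamma_c m m1 eps + 2 * gammabar_c m m1 eps - 1 = 1 / (1 - 2 * beta_c eps)"
      unfolding gammabar_c_def gamma_c_def
      by (rule g_alg) (use a b assms in \<open>auto simp: beta_c_def\<close>)
    then show ?thesis using b(2) by simp
  qed
qed

lemma kern_eq:
  fixes v v' u1 :: vec3
  assumes m1: "m1 > 0" and th1: "th1 > 0" and g: "g > 0" and mu: "mu_c m m1 eps = (2 * gb - 1) / g"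
  defines "u \<equiv> (1 / (2*g)) *\<^sub>R v + (- 1 / (2*g)) *\<^sub>R v'"
  shows "2 * \<bar>- 1 / (2*g)\<bar> ^ 3 * (1 / norm u) *
           nd m1 th1 (((v - u1) \<bullet> u + (2 * gb - 1) * (norm u)\<^sup>2) / norm u)
         = 1 / (2 * g\<^sup>2) * kern m m1 eps th1 u1 v v'"
proof (cases "v = v'")
  case True
  then show ?thesis by (simp add: u_def kern_def)
next
  case False
  define w where "w = v - v'"
  define a where "a = v - u1"
  define D where "D = norm w"
  have D: "D > 0" using False by (simp add: D_def w_def)
  have u: "u = (1/(2*g)) *\<^sub>R w" by (simp add: u_def w_def algebra_simps)
  have nu: "norm u = D / (2*g)" using g by (simp add: u D_def)
  have au: "(v - u1) \<bullet> u = (a \<bullet> w) / (2*g)" by (simp add: u a_def)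
  have b2: "(norm (v' - u1))\<^sup>2 = (norm a)\<^sup>2 - 2 * (a \<bullet> w) + D\<^sup>2"
  proof -
    have "v' - u1 = a - w" by (simp add: a_def w_def)
    then show ?thesis unfolding D_def
      by (simp add: power2_norm_eq_inner inner_diff_left inner_diff_right inner_commute)
  qed
  define X where "X = ((v - u1) \<bullet> u + (2 * gb - 1) * (norm u)\<^sup>2) / norm u"
  define Y where "Y = (1 + mu_c m m1 eps) * norm (v - v') + ((norm (v - u1))\<^sup>2 - (norm (v' - u1))\<^sup>2) / norm (v - v')"
  have XY: "X = Y / 2"
    unfolding X_def Y_def au nu b2 mu
    using D g by (simp add: a_def[symmetric] w_def[symmetric] D_def[symmetric] field_simps power2_eq_square)
  have ex: "- (m1 * X\<^sup>2) / (2 * th1) = - (m1 / (8 * th1)) * Y\<^sup>2"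
    unfolding XY using th1 by (simp add: field_simps power2_eq_square)
  have kk: "kern m m1 eps th1 u1 v v' = sqrt (m1 / (2*pi*th1)) * (1 / D) * exp (- (m1 / (8 * th1)) * Y\<^sup>2)"
    by (simp add: kern_def Y_def D_def w_def)
  have main: "2 * \<bar>- 1 / (2*g)\<bar> ^ 3 * (1 / norm u) * nd m1 th1 X = 1 / (2 * g\<^sup>2) * kern m m1 eps th1 u1 v v'"
    unfolding nd_alt[OF m1 th1] ex kk nu
    using D g by (simp add: field_simps power_eq_if)
  then show ?thesis unfolding X_def .
qed




lemma nn_integral_affine3:
  fixes f :: "vec3 \<Rightarrow> ennreal" and c :: real
  assumes [measurable]: "f \<in> borel_measurable borel" and c: "c \<noteq> 0"
  shows "(\<integral>\<^sup>+x. f x \<partial>lborel) = ennreal (\<bar>c\<bar>^3) * (\<integral>\<^sup>+x. f (t + c *\<^sub>R x) \<partial>lborel)"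
  by (subst lborel_affine[OF c, of t])
     (simp add: nn_integral_density nn_integral_distr nn_integral_cmult)

lemma kern_nonneg: "m1 > 0 \<Longrightarrow> th1 > 0 \<Longrightarrow> 0 \<le> kern m m1 eps th1 u1 v v'"
  unfolding kern_def by simp

lemma lemmaC:
  fixes g :: "vec3 \<Rightarrow> ennreal" and v u1 :: vec3
  assumes m: "m > 0" and m1: "m1 > 0" and e0: "0 < eps" and e1: "eps < 1" and th1: "th1 > 0"
    and g[measurable]: "g \<in> borel_measurable borel"
  shows "(\<integral>\<^sup>+p. ennreal \<bar>(v - fst p) \<bullet> snd p\<bar> * g (vstar m m1 eps v (fst p) (snd p))
              * ennreal (Maxw1 m1 th1 u1 (wstar m m1 eps v (fst p) (snd p))) \<partial>(lborel \<Otimes>\<^sub>M sphere_measure))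
       = ennreal (1 / (2 * (gamma_c m m1 eps)\<^sup>2)) * (\<integral>\<^sup>+v'. ennreal (kern m m1 eps th1 u1 v v') * g v' \<partial>lborel)"
proof -
  define gm where "gm = gamma_c m m1 eps"
  define gb where "gb = gammabar_c m m1 eps"
  have gm: "gm > 0" unfolding gm_def using params(1)[OF m m1 e0 e1] .
  have mu: "mu_c m m1 eps = (2 * gb - 1) / gm" unfolding gm_def gb_def using params(2)[OF m m1 e0 e1] .
  define Hf where "Hf u = g (v - (2*gm) *\<^sub>R u) * ennreal (nd m1 th1 (((v - u1) \<bullet> u + (2*gb - 1) * (norm u)\<^sup>2) / norm u))" for u :: vec3
  have Hfm[measurable]: "Hf \<in> borel_measurable borel" unfolding Hf_def by measurable
  define I where "I w n = ennreal \<bar>(v - w) \<bullet> n\<bar> * g (vstar m m1 eps v w n) * ennreal (Maxw1 m1 th1 u1 (wstar m m1 eps v w n))" for w n :: vec3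
  have Im: "(\<lambda>p. I (fst p) (snd p)) \<in> borel_measurable (lborel \<Otimes>\<^sub>M sphere_measure)"
    unfolding I_def vstar_def wstar_def by measurable
  have step1: "(\<integral>\<^sup>+p. I (fst p) (snd p) \<partial>(lborel \<Otimes>\<^sub>M sphere_measure)) = (\<integral>\<^sup>+n. (\<integral>\<^sup>+w. I w n \<partial>lborel) \<partial>sphere_measure)"
    using lsph.nn_integral_snd[OF Im] by simp
  have step2: "(\<integral>\<^sup>+w. I w n \<partial>lborel) = (\<integral>\<^sup>+s. ennreal \<bar>s\<bar> * Hf (s *\<^sub>R n) \<partial>lborel)" if n: "norm n = 1" for n
  proof -
    define G where "G s = ennreal (abs s) * g (v - (2 * gm * s) *\<^sub>R n)" for s :: real
    have Gm[measurable]: "G \<in> borel_measurable borel" unfolding G_def by measurable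
    have Inm[measurable]: "(\<lambda>w. I w n) \<in> borel_measurable borel" unfolding I_def vstar_def wstar_def by measurable
    have "(\<integral>\<^sup>+w. I w n \<partial>lborel) = ennreal (\<bar>-1\<bar>^3) * (\<integral>\<^sup>+q. I (v + (-1) *\<^sub>R q) n \<partial>lborel)"
      by (rule nn_integral_affine3) auto
    also have "\<dots> = (\<integral>\<^sup>+q. I (v - q) n \<partial>lborel)"
      by simp
    also have "\<dots> = (\<integral>\<^sup>+q. G (q \<bullet> n) * ennreal (Maxw1 m1 th1 u1 (v - q + ((2*gb) * (q \<bullet> n)) *\<^sub>R n)) \<partial>lborel)"
      by (intro nn_integral_cong) (simp add: I_def G_def vstar_def wstar_def gm_def gb_def mult.assoc)
    also have "\<dots> = (\<integral>\<^sup>+s. G s * ennreal (nd m1 th1 ((v - u1) \<bullet> n + (2*gb - 1) * s)) \<partial>lborel)"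
      by (rule lemmaA[OF m1 th1 n Gm])
    also have "\<dots> = (\<integral>\<^sup>+s. ennreal \<bar>s\<bar> * Hf (s *\<^sub>R n) \<partial>lborel)"
    proof (intro nn_integral_cong)
      fix s :: real
      show "G s * ennreal (nd m1 th1 ((v - u1) \<bullet> n + (2*gb - 1) * s)) = ennreal \<bar>s\<bar> * Hf (s *\<^sub>R n)"
      proof (cases "s = 0")
        case True then show ?thesis by (simp add: G_def)
      next
        case False
        have arg: "((v - u1) \<bullet> (s *\<^sub>R n) + (2*gb - 1) * (norm (s *\<^sub>R n))\<^sup>2) / norm (s *\<^sub>R n)
                 = sgn s * ((v - u1) \<bullet> n + (2*gb - 1) * s)"
          using False n by (simp add: power2_eq_square field_simps sgn_if abs_if)
        have "nd m1 th1 (sgn s * ((v - u1) \<bullet> n + (2*gb - 1) * s)) = nd m1 th1 ((v - u1) \<bullet> n + (2*gb - 1) * s)"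
          using False nd_sym[of m1 th1 "(v - u1) \<bullet> n + (2*gb - 1) * s"] by (cases "s > 0") (auto simp: sgn_if)
        then show ?thesis unfolding Hf_def G_def arg by (simp add: mult.assoc)
      qed
    qed
    finally show ?thesis .
  qed
  have "(\<integral>\<^sup>+n. (\<integral>\<^sup>+w. I w n \<partial>lborel) \<partial>sphere_measure) = (\<integral>\<^sup>+n. (\<integral>\<^sup>+s. ennreal \<bar>s\<bar> * Hf (s *\<^sub>R n) \<partial>lborel) \<partial>sphere_measure)"
    by (intro nn_integral_cong) (auto simp: space_sph step2)
  also have "\<dots> = 2 * (\<integral>\<^sup>+u. ennreal (1 / norm u) * Hf u \<partial>lborel)"
    by (rule lemmaB[OF Hfm])
  also have "\<dots> = 2 * (ennreal (\<bar>-1/(2*gm)\<bar>^3) * (\<integral>\<^sup>+v'. (ennreal (1 / norm ((1/(2*gm)) *\<^sub>R v + (-1/(2*gm)) *\<^sub>R v'))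
        * Hf ((1/(2*gm)) *\<^sub>R v + (-1/(2*gm)) *\<^sub>R v')) \<partial>lborel))"
    using gm by (subst nn_integral_affine3[of _ "-1/(2*gm)" "(1/(2*gm)) *\<^sub>R v"]) auto
  also have "\<dots> = 2 * (\<integral>\<^sup>+v'. ennreal (\<bar>-1/(2*gm)\<bar>^3) * (ennreal (1 / norm ((1/(2*gm)) *\<^sub>R v + (-1/(2*gm)) *\<^sub>R v'))
        * Hf ((1/(2*gm)) *\<^sub>R v + (-1/(2*gm)) *\<^sub>R v')) \<partial>lborel)"
    by (subst nn_integral_cmult) auto
  also have "\<dots> = (\<integral>\<^sup>+v'. 2 * (ennreal (\<bar>-1/(2*gm)\<bar>^3) * (ennreal (1 / norm ((1/(2*gm)) *\<^sub>R v + (-1/(2*gm)) *\<^sub>R v'))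
        * Hf ((1/(2*gm)) *\<^sub>R v + (-1/(2*gm)) *\<^sub>R v'))) \<partial>lborel)"
  proof -
    have affm: "(\<lambda>x::vec3. (1/(2*gm)) *\<^sub>R v + (-1/(2*gm)) *\<^sub>R x) \<in> lborel \<rightarrow>\<^sub>M borel" by measurable
    have [measurable]: "(\<lambda>x. Hf ((1/(2*gm)) *\<^sub>R v + (-1/(2*gm)) *\<^sub>R x)) \<in> borel_measurable lborel"
      using measurable_compose[OF affm Hfm] .
    show ?thesis by (rule nn_integral_cmult[symmetric]) measurable
  qed
  also have "\<dots> = (\<integral>\<^sup>+v'. ennreal (1 / (2 * gm\<^sup>2)) * (ennreal (kern m m1 eps th1 u1 v v') * g v') \<partial>lborel)"
  proof (intro nn_integral_cong)
    fix v' :: vec3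
    define u where "u = (1/(2*gm)) *\<^sub>R v + (-1/(2*gm)) *\<^sub>R v'"
    have vv: "v - (2*gm) *\<^sub>R u = v'" using gm by (simp add: u_def algebra_simps)
    have K: "2 * \<bar>- 1 / (2*gm)\<bar> ^ 3 * (1 / norm u) *
           nd m1 th1 (((v - u1) \<bullet> u + (2 * gb - 1) * (norm u)\<^sup>2) / norm u)
         = 1 / (2 * gm\<^sup>2) * kern m m1 eps th1 u1 v v'"
      unfolding u_def by (rule kern_eq[OF m1 th1 gm mu])
    have "2 * (ennreal (\<bar>-1/(2*gm)\<bar>^3) * (ennreal (1 / norm u) * Hf u))
        = ennreal (2 * \<bar>- 1 / (2*gm)\<bar> ^ 3 * (1 / norm u) *
           nd m1 th1 (((v - u1) \<bullet> u + (2 * gb - 1) * (norm u)\<^sup>2) / norm u)) * g v'"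
    proof -
      define A where "A = \<bar>- 1 / (2*gm)\<bar> ^ 3"
      define B where "B = 1 / norm u"
      define C where "C = nd m1 th1 (((v - u1) \<bullet> u + (2 * gb - 1) * (norm u)\<^sup>2) / norm u)"
      have A0: "0 \<le> A" "0 \<le> B" "0 \<le> C" by (auto simp: A_def B_def C_def)
      have "ennreal (2*A*B*C) = ennreal 2 * ennreal A * ennreal B * ennreal C"
        using A0 by (simp add: ennreal_mult)
      then have e: "ennreal (2*A*B*C) = 2 * ennreal A * ennreal B * ennreal C" by simp
      show ?thesis unfolding Hf_def vv A_def[symmetric] B_def[symmetric] C_def[symmetric] e
        by (simp only: mult_ac)
    qed
    also have "\<dots> = ennreal (1 / (2 * gm\<^sup>2)) * (ennreal (kern m m1 eps th1 u1 v v') * g v')"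
    proof -
      have "ennreal (1 / (2 * gm\<^sup>2) * kern m m1 eps th1 u1 v v') = ennreal (1 / (2 * gm\<^sup>2)) * ennreal (kern m m1 eps th1 u1 v v')"
        using kern_nonneg[OF m1 th1, of m eps u1 v v'] by (intro ennreal_mult) auto
      then show ?thesis unfolding K by (simp only: mult_ac)
    qed
    finally show "2 * (ennreal (\<bar>-1/(2*gm)\<bar>^3) * (ennreal (1 / norm ((1/(2*gm)) *\<^sub>R v + (-1/(2*gm)) *\<^sub>R v'))
        * Hf ((1/(2*gm)) *\<^sub>R v + (-1/(2*gm)) *\<^sub>R v'))) = ennreal (1 / (2 * gm\<^sup>2)) * (ennreal (kern m m1 eps th1 u1 v v') * g v')"
      unfolding u_def .
  qed
  also have "\<dots> = ennreal (1 / (2 * gm\<^sup>2)) * (\<integral>\<^sup>+v'. ennreal (kern m m1 eps th1 u1 v v') * g v' \<partial>lborel)"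
    by (rule nn_integral_cmult) (unfold kern_def, measurable)
  finally have fin: "(\<integral>\<^sup>+n. (\<integral>\<^sup>+w. I w n \<partial>lborel) \<partial>sphere_measure) = ennreal (1 / (2 * gm\<^sup>2)) * (\<integral>\<^sup>+v'. ennreal (kern m m1 eps th1 u1 v v') * g v' \<partial>lborel)" .
  have "(\<integral>\<^sup>+p. I (fst p) (snd p) \<partial>(lborel \<Otimes>\<^sub>M sphere_measure)) = ennreal (1 / (2 * gm\<^sup>2)) * (\<integral>\<^sup>+v'. ennreal (kern m m1 eps th1 u1 v v') * g v' \<partial>lborel)"
    using step1 fin by simp
  then show ?thesis unfolding I_def gm_def .
qed




lemma sf_lS: "sigma_finite_measure ((lborel::vec3 measure) \<Otimes>\<^sub>M sphere_measure)"
  by (intro sigma_finite_pair_measure sigma_finite_lborel sph.sigma_finite_measure_axioms)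

lemma inner_w:
  fixes g :: "vec3 \<Rightarrow> ennreal" and v u1 n :: vec3
  assumes m: "m > 0" and m1: "m1 > 0" and e0: "0 < eps" and e1: "eps < 1" and th1: "th1 > 0"
    and g[measurable]: "g \<in> borel_measurable borel" and n: "norm n = 1"
  shows "(\<integral>\<^sup>+w. ennreal \<bar>(v - w) \<bullet> n\<bar> * g (vstar m m1 eps v w n) * ennreal (Maxw1 m1 th1 u1 (wstar m m1 eps v w n)) \<partial>lborel)
    = (\<integral>\<^sup>+s. ennreal \<bar>s\<bar> * g (v - (2 * gamma_c m m1 eps * s) *\<^sub>R n)
          * ennreal (nd m1 th1 ((v - u1) \<bullet> n + (2 * gammabar_c m m1 eps - 1) * s)) \<partial>lborel)"
proof -
  define gm where "gm = gamma_c m m1 eps"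
  define gb where "gb = gammabar_c m m1 eps"
  define I where "I w = ennreal \<bar>(v - w) \<bullet> n\<bar> * g (vstar m m1 eps v w n) * ennreal (Maxw1 m1 th1 u1 (wstar m m1 eps v w n))" for w
  define G where "G s = ennreal (abs s) * g (v - (2 * gm * s) *\<^sub>R n)" for s :: real
  have Gm[measurable]: "G \<in> borel_measurable borel" unfolding G_def by measurable
  have Inm[measurable]: "I \<in> borel_measurable borel" unfolding I_def vstar_def wstar_def by measurable
  have "(\<integral>\<^sup>+w. I w \<partial>lborel) = ennreal (\<bar>-1\<bar>^3) * (\<integral>\<^sup>+q. I (v + (-1) *\<^sub>R q) \<partial>lborel)"
    by (rule nn_integral_affine3) auto
  also have "\<dots> = (\<integral>\<^sup>+q. I (v - q) \<partial>lborel)"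
    by simp
  also have "\<dots> = (\<integral>\<^sup>+q. G (q \<bullet> n) * ennreal (Maxw1 m1 th1 u1 (v - q + ((2*gb) * (q \<bullet> n)) *\<^sub>R n)) \<partial>lborel)"
    by (intro nn_integral_cong) (simp add: I_def G_def vstar_def wstar_def gm_def gb_def mult.assoc)
  also have "\<dots> = (\<integral>\<^sup>+s. G s * ennreal (nd m1 th1 ((v - u1) \<bullet> n + (2*gb - 1) * s)) \<partial>lborel)"
    by (rule lemmaA[OF m1 th1 n Gm])
  finally show ?thesis unfolding I_def G_def gm_def gb_def .
qed

lemma sigma_n:
  fixes v' u1 n :: vec3
  assumes m1: "m1 > 0" and th1: "th1 > 0" and n: "norm n = 1"
  shows "(\<integral>\<^sup>+w. ennreal \<bar>(v' - w) \<bullet> n\<bar> * ennreal (Maxw1 m1 th1 u1 w) \<partial>lborel)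
    = (\<integral>\<^sup>+s. ennreal \<bar>s\<bar> * ennreal (nd m1 th1 ((v' - u1) \<bullet> n - s)) \<partial>lborel)"
proof -
  define I where "I w = ennreal \<bar>(v' - w) \<bullet> n\<bar> * ennreal (Maxw1 m1 th1 u1 w)" for w
  have Inm[measurable]: "I \<in> borel_measurable borel" unfolding I_def by measurable
  have "(\<integral>\<^sup>+w. I w \<partial>lborel) = ennreal (\<bar>-1\<bar>^3) * (\<integral>\<^sup>+q. I (v' + (-1) *\<^sub>R q) \<partial>lborel)"
    by (rule nn_integral_affine3) auto
  also have "\<dots> = (\<integral>\<^sup>+q. I (v' - q) \<partial>lborel)"
    by simp
  also have "\<dots> = (\<integral>\<^sup>+q. (\<lambda>s. ennreal \<bar>s\<bar>) (q \<bullet> n) * ennreal (Maxw1 m1 th1 u1 (v' - q + (0 * (q \<bullet> n)) *\<^sub>R n)) \<partial>lborel)"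
    by (intro nn_integral_cong) (simp add: I_def)
  also have "\<dots> = (\<integral>\<^sup>+s. ennreal \<bar>s\<bar> * ennreal (nd m1 th1 ((v' - u1) \<bullet> n + (0 - 1) * s)) \<partial>lborel)"
    by (rule lemmaA[OF m1 th1 n]) measurable
  finally show ?thesis unfolding I_def by simp
qed




lemma lemmaD_n:
  fixes g :: "vec3 \<Rightarrow> ennreal" and u1 n :: vec3
  assumes m: "m > 0" and m1: "m1 > 0" and e0: "0 < eps" and e1: "eps < 1" and th1: "th1 > 0"
    and g[measurable]: "g \<in> borel_measurable borel" and n: "norm n = 1"
  shows "(\<integral>\<^sup>+v. (\<integral>\<^sup>+w. ennreal \<bar>(v - w) \<bullet> n\<bar> * g (vstar m m1 eps v w n) * ennreal (Maxw1 m1 th1 u1 (wstar m m1 eps v w n)) \<partial>lborel) \<partial>lborel)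
    = ennreal (eps\<^sup>2) * (\<integral>\<^sup>+v'. g v' * (\<integral>\<^sup>+w. ennreal \<bar>(v' - w) \<bullet> n\<bar> * ennreal (Maxw1 m1 th1 u1 w) \<partial>lborel) \<partial>lborel)"
proof -
  define gm where "gm = gamma_c m m1 eps"
  define gb where "gb = gammabar_c m m1 eps"
  have ge: "2 * gm + 2 * gb - 1 = 1 / eps" unfolding gm_def gb_def by (rule params(3)[OF m m1 e0 e1])
  have nn: "n \<bullet> n = 1" using n by (simp add: norm_eq_sqrt_inner)
  define F where "F v s = ennreal \<bar>s\<bar> * g (v - (2 * gm * s) *\<^sub>R n) * ennreal (nd m1 th1 ((v - u1) \<bullet> n + (2 * gb - 1) * s))" for v :: vec3 and s :: real
  define F2 where "F2 v s = ennreal \<bar>s\<bar> * g v * ennreal (nd m1 th1 ((v - u1) \<bullet> n + s / eps))" for v :: vec3 and s :: real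
  have Fm: "case_prod F \<in> borel_measurable ((lborel::vec3 measure) \<Otimes>\<^sub>M (lborel::real measure))"
    unfolding F_def by measurable
  have F2m: "case_prod F2 \<in> borel_measurable ((lborel::vec3 measure) \<Otimes>\<^sub>M (lborel::real measure))"
    unfolding F2_def by measurable
  have "(\<integral>\<^sup>+v. (\<integral>\<^sup>+w. ennreal \<bar>(v - w) \<bullet> n\<bar> * g (vstar m m1 eps v w n) * ennreal (Maxw1 m1 th1 u1 (wstar m m1 eps v w n)) \<partial>lborel) \<partial>lborel)
      = (\<integral>\<^sup>+v. (\<integral>\<^sup>+s. F v s \<partial>lborel) \<partial>lborel)"
    unfolding F_def gm_def gb_def by (intro nn_integral_cong inner_w[OF m m1 e0 e1 th1 g n])
  also have "\<dots> = (\<integral>\<^sup>+s. (\<integral>\<^sup>+v. F v s \<partial>lborel) \<partial>lborel)"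
    by (rule pair_sigma_finite.Fubini'[OF ps_vr Fm, symmetric])
  also have "\<dots> = (\<integral>\<^sup>+s. (\<integral>\<^sup>+v. F2 v s \<partial>lborel) \<partial>lborel)"
  proof (rule nn_integral_cong)
    fix s :: real
    have [measurable]: "(\<lambda>v. F v s) \<in> borel_measurable borel" unfolding F_def by measurable
    have "(\<integral>\<^sup>+v. F v s \<partial>lborel) = ennreal (\<bar>1\<bar>^3) * (\<integral>\<^sup>+x. F ((2 * gm * s) *\<^sub>R n + 1 *\<^sub>R x) s \<partial>lborel)"
      by (rule nn_integral_affine3) auto
    also have "\<dots> = (\<integral>\<^sup>+x. F2 x s \<partial>lborel)"
    proof -
      have "(x - u1 + (2 * gm * s) *\<^sub>R n) \<bullet> n + (2 * gb - 1) * s = (x - u1) \<bullet> n + s / eps" for x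
      proof -
        have "(x - u1 + (2 * gm * s) *\<^sub>R n) \<bullet> n + (2 * gb - 1) * s = (x - u1) \<bullet> n + (2 * gm + 2 * gb - 1) * s"
          using nn by (simp add: inner_add_left algebra_simps)
        then show ?thesis unfolding ge by simp
      qed
      then show ?thesis by (simp add: F_def F2_def algebra_simps)
    qed
    finally show "(\<integral>\<^sup>+v. F v s \<partial>lborel) = (\<integral>\<^sup>+v. F2 v s \<partial>lborel)" .
  qed
  also have "\<dots> = (\<integral>\<^sup>+v. (\<integral>\<^sup>+s. F2 v s \<partial>lborel) \<partial>lborel)"
    by (rule pair_sigma_finite.Fubini'[OF ps_vr F2m])
  also have "\<dots> = (\<integral>\<^sup>+v'. ennreal (eps\<^sup>2) * (g v' * (\<integral>\<^sup>+w. ennreal \<bar>(v' - w) \<bullet> n\<bar> * ennreal (Maxw1 m1 th1 u1 w) \<partial>lborel)) \<partial>lborel)"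
  proof (rule nn_integral_cong)
    fix v' :: vec3
    define d where "d = (v' - u1) \<bullet> n"
    have "(\<integral>\<^sup>+s. F2 v' s \<partial>lborel) = g v' * (\<integral>\<^sup>+s. ennreal \<bar>s\<bar> * ennreal (nd m1 th1 (d + s / eps)) \<partial>lborel)"
      unfolding F2_def d_def by (subst nn_integral_cmult[symmetric]) (measurable, simp add: mult_ac)
    also have "(\<integral>\<^sup>+s. ennreal \<bar>s\<bar> * ennreal (nd m1 th1 (d + s / eps)) \<partial>lborel)
        = ennreal \<bar>-eps\<bar> * (\<integral>\<^sup>+x. ennreal \<bar>0 + -eps * x\<bar> * ennreal (nd m1 th1 (d + (0 + -eps * x) / eps)) \<partial>lborel)"
      using e0 by (intro nn_integral_real_affine) auto
    also have "\<dots> = ennreal (eps\<^sup>2) * (\<integral>\<^sup>+x. ennreal \<bar>x\<bar> * ennreal (nd m1 th1 (d - x)) \<partial>lborel)"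
    proof -
      have "\<And>x. ennreal \<bar>0 + -eps * x\<bar> * ennreal (nd m1 th1 (d + (0 + -eps * x) / eps)) = ennreal eps * (ennreal \<bar>x\<bar> * ennreal (nd m1 th1 (d - x)))"
        using e0 by (simp add: abs_mult ennreal_mult mult_ac)
      then show ?thesis using e0
        by (simp add: nn_integral_cmult power2_eq_square ennreal_mult mult_ac)
    qed
    also have "(\<integral>\<^sup>+x. ennreal \<bar>x\<bar> * ennreal (nd m1 th1 (d - x)) \<partial>lborel) = (\<integral>\<^sup>+w. ennreal \<bar>(v' - w) \<bullet> n\<bar> * ennreal (Maxw1 m1 th1 u1 w) \<partial>lborel)"
      unfolding d_def by (rule sigma_n[OF m1 th1 n, symmetric])
    finally show "(\<integral>\<^sup>+s. F2 v' s \<partial>lborel) = ennreal (eps\<^sup>2) * (g v' * (\<integral>\<^sup>+w. ennreal \<bar>(v' - w) \<bullet> n\<bar> * ennreal (Maxw1 m1 th1 u1 w) \<partial>lborel))"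
      by (simp add: mult_ac)
  qed
  also have "\<dots> = ennreal (eps\<^sup>2) * (\<integral>\<^sup>+v'. g v' * (\<integral>\<^sup>+w. ennreal \<bar>(v' - w) \<bullet> n\<bar> * ennreal (Maxw1 m1 th1 u1 w) \<partial>lborel) \<partial>lborel)"
    by (rule nn_integral_cmult) measurable
  finally show ?thesis .
qed




lemma sph_fst[measurable]: "fst \<in> (sphere_measure \<Otimes>\<^sub>M M) \<rightarrow>\<^sub>M (borel :: vec3 measure)"
  using measurable_compose[OF measurable_fst[of sphere_measure M] sph_id] by simp

definition Sig :: "real \<Rightarrow> real \<Rightarrow> vec3 \<Rightarrow> vec3 \<Rightarrow> ennreal" where
  "Sig m1 th1 u1 v' = (\<integral>\<^sup>+p. ennreal \<bar>(v' - fst p) \<bullet> snd p\<bar> * ennreal (Maxw1 m1 th1 u1 (fst p)) \<partial>(lborel \<Otimes>\<^sub>M sphere_measure))"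

lemma Sig_meas[measurable]: "Sig m1 th1 u1 \<in> borel_measurable borel"
proof -
  interpret sf: sigma_finite_measure "(lborel::vec3 measure) \<Otimes>\<^sub>M sphere_measure" by (rule sf_lS)
  show ?thesis unfolding Sig_def[abs_def] by measurable
qed

lemma lemmaD:
  fixes g :: "vec3 \<Rightarrow> ennreal" and u1 :: vec3
  assumes m: "m > 0" and m1: "m1 > 0" and e0: "0 < eps" and e1: "eps < 1" and th1: "th1 > 0"
    and g[measurable]: "g \<in> borel_measurable borel"
  shows "(\<integral>\<^sup>+v. (\<integral>\<^sup>+p. ennreal \<bar>(v - fst p) \<bullet> snd p\<bar> * g (vstar m m1 eps v (fst p) (snd p))
              * ennreal (Maxw1 m1 th1 u1 (wstar m m1 eps v (fst p) (snd p))) \<partial>(lborel \<Otimes>\<^sub>M sphere_measure)) \<partial>lborel)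
    = ennreal (eps\<^sup>2) * (\<integral>\<^sup>+v'. g v' * Sig m1 th1 u1 v' \<partial>lborel)"
proof -
  define I where "I v w n = ennreal \<bar>(v - w) \<bullet> n\<bar> * g (vstar m m1 eps v w n) * ennreal (Maxw1 m1 th1 u1 (wstar m m1 eps v w n))" for v w n :: vec3
  define J where "J v' w n = ennreal \<bar>(v' - w) \<bullet> n\<bar> * ennreal (Maxw1 m1 th1 u1 w)" for v' w n :: vec3
  have Im: "(\<lambda>p. I v (fst p) (snd p)) \<in> borel_measurable (lborel \<Otimes>\<^sub>M sphere_measure)" for v
    unfolding I_def vstar_def wstar_def by measurable
  have Jm: "(\<lambda>p. J v (fst p) (snd p)) \<in> borel_measurable (lborel \<Otimes>\<^sub>M sphere_measure)" for v
    unfolding J_def by measurable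
  have m2: "(\<lambda>(v, n). \<integral>\<^sup>+w. I v w n \<partial>lborel) \<in> borel_measurable ((lborel::vec3 measure) \<Otimes>\<^sub>M sphere_measure)"
    unfolding I_def vstar_def wstar_def by measurable
  have m3: "(\<lambda>(v', n). g v' * (\<integral>\<^sup>+w. J v' w n \<partial>lborel)) \<in> borel_measurable ((lborel::vec3 measure) \<Otimes>\<^sub>M sphere_measure)"
    unfolding J_def by measurable
  have "(\<integral>\<^sup>+v. (\<integral>\<^sup>+p. I v (fst p) (snd p) \<partial>(lborel \<Otimes>\<^sub>M sphere_measure)) \<partial>lborel)
      = (\<integral>\<^sup>+v. (\<integral>\<^sup>+n. (\<integral>\<^sup>+w. I v w n \<partial>lborel) \<partial>sphere_measure) \<partial>lborel)"
    using lsph.nn_integral_snd[OF Im] by simp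
  also have "\<dots> = (\<integral>\<^sup>+n. (\<integral>\<^sup>+v. (\<integral>\<^sup>+w. I v w n \<partial>lborel) \<partial>lborel) \<partial>sphere_measure)"
    using lsph.Fubini'[OF m2] by simp
  also have "\<dots> = (\<integral>\<^sup>+n. ennreal (eps\<^sup>2) * (\<integral>\<^sup>+v'. g v' * (\<integral>\<^sup>+w. J v' w n \<partial>lborel) \<partial>lborel) \<partial>sphere_measure)"
    unfolding I_def J_def
    by (intro nn_integral_cong lemmaD_n[OF m m1 e0 e1 th1 g]) (simp add: space_sph)
  also have "\<dots> = ennreal (eps\<^sup>2) * (\<integral>\<^sup>+n. (\<integral>\<^sup>+v'. g v' * (\<integral>\<^sup>+w. J v' w n \<partial>lborel) \<partial>lborel) \<partial>sphere_measure)"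
    unfolding J_def by (intro nn_integral_cmult) measurable
  also have "(\<integral>\<^sup>+n. (\<integral>\<^sup>+v'. g v' * (\<integral>\<^sup>+w. J v' w n \<partial>lborel) \<partial>lborel) \<partial>sphere_measure)
      = (\<integral>\<^sup>+v'. (\<integral>\<^sup>+n. g v' * (\<integral>\<^sup>+w. J v' w n \<partial>lborel) \<partial>sphere_measure) \<partial>lborel)"
    using lsph.Fubini'[OF m3] by simp
  also have "\<dots> = (\<integral>\<^sup>+v'. g v' * Sig m1 th1 u1 v' \<partial>lborel)"
  proof (rule nn_integral_cong)
    fix v' :: vec3
    have [measurable]: "(\<lambda>n. \<integral>\<^sup>+w. J v' w n \<partial>lborel) \<in> borel_measurable sphere_measure"
      unfolding J_def by measurable
    have "(\<integral>\<^sup>+n. g v' * (\<integral>\<^sup>+w. J v' w n \<partial>lborel) \<partial>sphere_measure) = g v' * (\<integral>\<^sup>+n. (\<integral>\<^sup>+w. J v' w n \<partial>lborel) \<partial>sphere_measure)"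
      by (rule nn_integral_cmult) measurable
    also have "(\<integral>\<^sup>+n. (\<integral>\<^sup>+w. J v' w n \<partial>lborel) \<partial>sphere_measure) = Sig m1 th1 u1 v'"
      unfolding Sig_def using lsph.nn_integral_snd[OF Jm[of v']] by (simp add: J_def)
    finally show "(\<integral>\<^sup>+n. g v' * (\<integral>\<^sup>+w. J v' w n \<partial>lborel) \<partial>sphere_measure) = g v' * Sig m1 th1 u1 v'" .
  qed
  finally show ?thesis unfolding I_def .
qed




lemma K0_finite: assumes m1: "m1 > 0" and th1: "th1 > 0"
  shows "(\<integral>\<^sup>+t. ennreal \<bar>t\<bar> * ennreal (nd m1 th1 t) \<partial>lborel) < \<infinity>"
proof -
  have s: "0 < sqrt (th1/m1)" using m1 th1 by simp
  have "integrable lborel (\<lambda>x. normal_density 0 (sqrt (th1/m1)) x * \<bar>x - 0\<bar>^1)"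
    by (rule integrable_normal_moment_abs[OF s])
  then have "(\<integral>\<^sup>+x. ennreal (norm (normal_density 0 (sqrt (th1/m1)) x * \<bar>x - 0\<bar>^1)) \<partial>lborel) < \<infinity>"
    by (simp add: integrable_iff_bounded)
  moreover have "\<And>x. ennreal (norm (normal_density 0 (sqrt (th1/m1)) x * \<bar>x - 0\<bar>^1)) = ennreal \<bar>x\<bar> * ennreal (nd m1 th1 x)"
    by (simp add: nd_def ennreal_mult[symmetric] mult.commute)
  ultimately show ?thesis by simp
qed

lemma J_bound: assumes m1: "m1 > 0" and th1: "th1 > 0"
  shows "(\<integral>\<^sup>+s. ennreal \<bar>s\<bar> * ennreal (nd m1 th1 (d - s)) \<partial>lborel)
     \<le> ennreal \<bar>d\<bar> + (\<integral>\<^sup>+t. ennreal \<bar>t\<bar> * ennreal (nd m1 th1 t) \<partial>lborel)"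
proof -
  have "(\<integral>\<^sup>+s. ennreal \<bar>s\<bar> * ennreal (nd m1 th1 (d - s)) \<partial>lborel)
      \<le> (\<integral>\<^sup>+s. ennreal \<bar>d\<bar> * ennreal (nd m1 th1 (d - s)) + ennreal \<bar>s - d\<bar> * ennreal (nd m1 th1 (d - s)) \<partial>lborel)"
  proof (rule nn_integral_mono)
    fix s :: real
    have "ennreal \<bar>s\<bar> \<le> ennreal (\<bar>d\<bar> + \<bar>s - d\<bar>)" by (intro ennreal_leI) linarith
    also have "\<dots> = ennreal \<bar>d\<bar> + ennreal \<bar>s - d\<bar>" by (simp add: ennreal_plus)
    finally have "ennreal \<bar>s\<bar> * ennreal (nd m1 th1 (d - s)) \<le> (ennreal \<bar>d\<bar> + ennreal \<bar>s - d\<bar>) * ennreal (nd m1 th1 (d - s))"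
      by (rule mult_right_mono) simp
    then show "ennreal \<bar>s\<bar> * ennreal (nd m1 th1 (d - s)) \<le> ennreal \<bar>d\<bar> * ennreal (nd m1 th1 (d - s)) + ennreal \<bar>s - d\<bar> * ennreal (nd m1 th1 (d - s))"
      by (simp add: distrib_right)
  qed
  also have "\<dots> = (\<integral>\<^sup>+s. ennreal \<bar>d\<bar> * ennreal (nd m1 th1 (d - s)) \<partial>lborel) + (\<integral>\<^sup>+s. ennreal \<bar>s - d\<bar> * ennreal (nd m1 th1 (d - s)) \<partial>lborel)"
    by (rule nn_integral_add) auto
  also have "(\<integral>\<^sup>+s. ennreal \<bar>d\<bar> * ennreal (nd m1 th1 (d - s)) \<partial>lborel) = ennreal \<bar>d\<bar>"
    by (subst nn_integral_cmult) (auto simp: nn_nd[OF m1 th1])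
  also have "(\<integral>\<^sup>+s. ennreal \<bar>s - d\<bar> * ennreal (nd m1 th1 (d - s)) \<partial>lborel)
      = ennreal \<bar>-1\<bar> * (\<integral>\<^sup>+x. ennreal \<bar>(d + -1 * x) - d\<bar> * ennreal (nd m1 th1 (d - (d + -1 * x))) \<partial>lborel)"
    by (rule nn_integral_real_affine) auto
  also have "\<dots> = (\<integral>\<^sup>+t. ennreal \<bar>t\<bar> * ennreal (nd m1 th1 t) \<partial>lborel)"
    by simp
  finally show ?thesis .
qed

lemma Sig_finite: assumes m1: "m1 > 0" and th1: "th1 > 0"
  shows "Sig m1 th1 u1 v' < \<infinity>"
proof -
  define K0 where "K0 = (\<integral>\<^sup>+t. ennreal \<bar>t\<bar> * ennreal (nd m1 th1 t) \<partial>lborel)"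
  have K0: "K0 < \<infinity>" unfolding K0_def by (rule K0_finite[OF m1 th1])
  define J where "J w n = ennreal \<bar>(v' - w) \<bullet> n\<bar> * ennreal (Maxw1 m1 th1 u1 w)" for w n :: vec3
  have Jm: "(\<lambda>p. J (fst p) (snd p)) \<in> borel_measurable (lborel \<Otimes>\<^sub>M sphere_measure)"
    unfolding J_def by measurable
  have "Sig m1 th1 u1 v' = (\<integral>\<^sup>+n. (\<integral>\<^sup>+w. J w n \<partial>lborel) \<partial>sphere_measure)"
    unfolding Sig_def using lsph.nn_integral_snd[OF Jm] by (simp add: J_def)
  also have "\<dots> \<le> (\<integral>\<^sup>+n. ennreal (norm (v' - u1)) + K0 \<partial>sphere_measure)"
  proof (rule nn_integral_mono)
    fix n assume "n \<in> space sphere_measure"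
    then have n: "norm n = 1" by (simp add: space_sph)
    have "(\<integral>\<^sup>+w. J w n \<partial>lborel) = (\<integral>\<^sup>+s. ennreal \<bar>s\<bar> * ennreal (nd m1 th1 ((v' - u1) \<bullet> n - s)) \<partial>lborel)"
      unfolding J_def by (rule sigma_n[OF m1 th1 n])
    also have "\<dots> \<le> ennreal \<bar>(v' - u1) \<bullet> n\<bar> + K0"
      unfolding K0_def by (rule J_bound[OF m1 th1])
    also have "\<dots> \<le> ennreal (norm (v' - u1)) + K0"
    proof -
      have "\<bar>(v' - u1) \<bullet> n\<bar> \<le> norm (v' - u1)"
        using Cauchy_Schwarz_ineq2[of "v' - u1" n] n by simp
      then show ?thesis by (intro add_right_mono ennreal_leI)
    qed
    finally show "(\<integral>\<^sup>+w. J w n \<partial>lborel) \<le> ennreal (norm (v' - u1)) + K0" .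
  qed
  also have "\<dots> = (ennreal (norm (v' - u1)) + K0) * emeasure sphere_measure (space sphere_measure)"
    by simp
  also have "\<dots> < \<infinity>"
  proof -
    have F: "emeasure sphere_measure (space sphere_measure) < top"
      by (rule less_top[THEN iffD1, OF sph.emeasure_finite])
    show ?thesis using K0 F by (simp add: ennreal_mult_less_top)
  qed
  finally show ?thesis .
qed

lemma Sig_coll: assumes m1: "m1 > 0" and th1: "th1 > 0"
  shows "Sig m1 th1 u1 v' = ennreal (coll_freq m1 th1 u1 v')"
proof -
  define h where "h p = \<bar>(v' - fst p) \<bullet> snd p\<bar> * Maxw1 m1 th1 u1 (fst p)" for p :: "vec3 \<times> vec3"
  have hm[measurable]: "h \<in> borel_measurable (lborel \<Otimes>\<^sub>M sphere_measure)" unfolding h_def by measurable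
  have e: "(\<integral>\<^sup>+p. ennreal (h p) \<partial>(lborel \<Otimes>\<^sub>M sphere_measure)) = Sig m1 th1 u1 v'"
    unfolding Sig_def h_def by (simp add: ennreal_mult)
  have int: "integrable (lborel \<Otimes>\<^sub>M sphere_measure) h"
    unfolding integrable_iff_bounded using Sig_finite[OF m1 th1, of u1 v'] e
    by (simp add: h_def)
  have "Sig m1 th1 u1 v' = ennreal (integral\<^sup>L (lborel \<Otimes>\<^sub>M sphere_measure) h)"
    unfolding e[symmetric] by (rule nn_integral_eq_integral[OF int]) (simp add: h_def)
  then show ?thesis unfolding coll_freq_def h_def[abs_def] .
qed




lemma key:
  fixes m m1 eps th1 :: real and u1 :: vec3 and f :: "vec3 \<times> vec3 \<Rightarrow> real" and x v :: vec3
  assumes m: "m > 0" and m1: "m1 > 0" and e0: "0 < eps" and e1: "eps < 1" and th1: "th1 > 0"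
    and fm[measurable]: "f \<in> borel_measurable (lborel \<Otimes>\<^sub>M lborel)"
    and Fin: "(\<integral>\<^sup>+p. ennreal \<bar>(v - fst p) \<bullet> snd p\<bar> * ennreal \<bar>f (x, vstar m m1 eps v (fst p) (snd p))\<bar>
              * ennreal (Maxw1 m1 th1 u1 (wstar m m1 eps v (fst p) (snd p))) \<partial>(lborel \<Otimes>\<^sub>M sphere_measure)) \<noteq> \<infinity>"
  shows "integrable (lborel \<Otimes>\<^sub>M sphere_measure) (gain_integrand m m1 eps th1 u1 f x v)
         \<and> integrable lborel (\<lambda>v'. kern m m1 eps th1 u1 v v' * f (x, v'))
         \<and> Qplus m m1 eps th1 u1 f x v
             = 1 / (2 * eps\<^sup>2 * (gamma_c m m1 eps)\<^sup>2)
               * (\<integral>v'. kern m m1 eps th1 u1 v v' * f (x, v') \<partial>lborel)"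
proof -
  define c where "c = 1 / (2 * (gamma_c m m1 eps)\<^sup>2)"
  have c0: "c > 0" unfolding c_def using params(1)[OF m m1 e0 e1] by simp
  have fx[measurable]: "(\<lambda>y. f (x, y)) \<in> borel_measurable borel"
    using measurable_Pair2[OF fm, of x] by (simp only: measurable_lborel2 space_lborel space_borel UNIV_I)
  define G where "G = gain_integrand m m1 eps th1 u1 f x v"
  have Gm[measurable]: "G \<in> borel_measurable (lborel \<Otimes>\<^sub>M sphere_measure)"
    unfolding G_def gain_integrand_def vstar_def wstar_def by measurable
  define Kf where "Kf v' = kern m m1 eps th1 u1 v v' * f (x, v')" for v'
  have Kfm[measurable]: "Kf \<in> borel_measurable lborel" unfolding Kf_def kern_def by measurable
  have kn: "\<And>v'. 0 \<le> kern m m1 eps th1 u1 v v'" by (rule kern_nonneg[OF m1 th1])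
  have CA: "(\<integral>\<^sup>+p. ennreal \<bar>(v - fst p) \<bullet> snd p\<bar> * ennreal \<bar>f (x, vstar m m1 eps v (fst p) (snd p))\<bar>
              * ennreal (Maxw1 m1 th1 u1 (wstar m m1 eps v (fst p) (snd p))) \<partial>(lborel \<Otimes>\<^sub>M sphere_measure))
     = ennreal c * (\<integral>\<^sup>+v'. ennreal (kern m m1 eps th1 u1 v v') * ennreal \<bar>f (x, v')\<bar> \<partial>lborel)"
    unfolding c_def by (rule lemmaC[OF m m1 e0 e1 th1]) measurable
  have CP: "(\<integral>\<^sup>+p. ennreal \<bar>(v - fst p) \<bullet> snd p\<bar> * ennreal (f (x, vstar m m1 eps v (fst p) (snd p)))
              * ennreal (Maxw1 m1 th1 u1 (wstar m m1 eps v (fst p) (snd p))) \<partial>(lborel \<Otimes>\<^sub>M sphere_measure))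
     = ennreal c * (\<integral>\<^sup>+v'. ennreal (kern m m1 eps th1 u1 v v') * ennreal (f (x, v')) \<partial>lborel)"
    unfolding c_def by (rule lemmaC[OF m m1 e0 e1 th1]) measurable
  have CN: "(\<integral>\<^sup>+p. ennreal \<bar>(v - fst p) \<bullet> snd p\<bar> * ennreal (- f (x, vstar m m1 eps v (fst p) (snd p)))
              * ennreal (Maxw1 m1 th1 u1 (wstar m m1 eps v (fst p) (snd p))) \<partial>(lborel \<Otimes>\<^sub>M sphere_measure))
     = ennreal c * (\<integral>\<^sup>+v'. ennreal (kern m m1 eps th1 u1 v v') * ennreal (- f (x, v')) \<partial>lborel)"
    unfolding c_def by (rule lemmaC[OF m m1 e0 e1 th1]) measurable
  have int1: "integrable (lborel \<Otimes>\<^sub>M sphere_measure) G"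
  proof -
    have "(\<integral>\<^sup>+p. ennreal (norm (G p)) \<partial>(lborel \<Otimes>\<^sub>M sphere_measure))
        = (\<integral>\<^sup>+p. ennreal \<bar>(v - fst p) \<bullet> snd p\<bar> * ennreal \<bar>f (x, vstar m m1 eps v (fst p) (snd p))\<bar>
              * ennreal (Maxw1 m1 th1 u1 (wstar m m1 eps v (fst p) (snd p))) \<partial>(lborel \<Otimes>\<^sub>M sphere_measure))"
      by (intro nn_integral_cong) (simp add: G_def gain_integrand_def abs_mult ennreal_mult)
    then show ?thesis unfolding integrable_iff_bounded using Fin by (simp add: less_top)
  qed
  have fin2: "(\<integral>\<^sup>+v'. ennreal (kern m m1 eps th1 u1 v v') * ennreal \<bar>f (x, v')\<bar> \<partial>lborel) \<noteq> \<infinity>"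
    using Fin c0 unfolding CA by (auto simp: ennreal_mult_eq_top_iff)
  have int2: "integrable lborel Kf"
  proof -
    have "(\<integral>\<^sup>+v'. ennreal (norm (Kf v')) \<partial>lborel) = (\<integral>\<^sup>+v'. ennreal (kern m m1 eps th1 u1 v v') * ennreal \<bar>f (x, v')\<bar> \<partial>lborel)"
      by (intro nn_integral_cong) (simp add: Kf_def abs_mult kn ennreal_mult)
    then show ?thesis unfolding integrable_iff_bounded using fin2 by (simp add: less_top)
  qed
  have eqP: "(\<integral>\<^sup>+p. ennreal (G p) \<partial>(lborel \<Otimes>\<^sub>M sphere_measure)) = ennreal c * (\<integral>\<^sup>+v'. ennreal (Kf v') \<partial>lborel)"
  proof -
    have "(\<integral>\<^sup>+p. ennreal (G p) \<partial>(lborel \<Otimes>\<^sub>M sphere_measure))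
       = (\<integral>\<^sup>+p. ennreal \<bar>(v - fst p) \<bullet> snd p\<bar> * ennreal (f (x, vstar m m1 eps v (fst p) (snd p)))
              * ennreal (Maxw1 m1 th1 u1 (wstar m m1 eps v (fst p) (snd p))) \<partial>(lborel \<Otimes>\<^sub>M sphere_measure))"
      by (intro nn_integral_cong) (simp add: G_def gain_integrand_def ennreal_mult' ennreal_mult'')
    also have "\<dots> = ennreal c * (\<integral>\<^sup>+v'. ennreal (Kf v') \<partial>lborel)"
      unfolding CP Kf_def using kn by (simp add: ennreal_mult')
    finally show ?thesis .
  qed
  have eqN: "(\<integral>\<^sup>+p. ennreal (- G p) \<partial>(lborel \<Otimes>\<^sub>M sphere_measure)) = ennreal c * (\<integral>\<^sup>+v'. ennreal (- Kf v') \<partial>lborel)"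
  proof -
    have "(\<integral>\<^sup>+p. ennreal (- G p) \<partial>(lborel \<Otimes>\<^sub>M sphere_measure))
       = (\<integral>\<^sup>+p. ennreal \<bar>(v - fst p) \<bullet> snd p\<bar> * ennreal (- f (x, vstar m m1 eps v (fst p) (snd p)))
              * ennreal (Maxw1 m1 th1 u1 (wstar m m1 eps v (fst p) (snd p))) \<partial>(lborel \<Otimes>\<^sub>M sphere_measure))"
    proof (intro nn_integral_cong)
      fix p :: "vec3 \<times> vec3"
      have "- G p = \<bar>(v - fst p) \<bullet> snd p\<bar> * (- f (x, vstar m m1 eps v (fst p) (snd p))) * Maxw1 m1 th1 u1 (wstar m m1 eps v (fst p) (snd p))"
        by (simp add: G_def gain_integrand_def)
      then show "ennreal (- G p) = ennreal \<bar>(v - fst p) \<bullet> snd p\<bar> * ennreal (- f (x, vstar m m1 eps v (fst p) (snd p)))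
              * ennreal (Maxw1 m1 th1 u1 (wstar m m1 eps v (fst p) (snd p)))"
        by (simp only: ennreal_mult' ennreal_mult'' abs_ge_zero Maxw1_nonneg)
    qed
    also have "\<dots> = ennreal c * (\<integral>\<^sup>+v'. ennreal (- Kf v') \<partial>lborel)"
    proof -
      have "\<And>v'. ennreal (- Kf v') = ennreal (kern m m1 eps th1 u1 v v') * ennreal (- f (x, v'))"
        using kn by (simp add: Kf_def ennreal_mult'[symmetric])
      then show ?thesis unfolding CN by simp
    qed
    finally show ?thesis .
  qed
  have intG: "integral\<^sup>L (lborel \<Otimes>\<^sub>M sphere_measure) G = c * integral\<^sup>L lborel Kf"
    unfolding real_lebesgue_integral_def[OF int1] real_lebesgue_integral_def[OF int2] eqP eqN
    using c0 by (simp add: enn2real_mult right_diff_distrib)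
  have pw: "eps powr (-2) = 1 / eps\<^sup>2"
    using e0 by (simp add: powr_minus_divide powr_realpow)
  have "Qplus m m1 eps th1 u1 f x v = 1 / (2 * eps\<^sup>2 * (gamma_c m m1 eps)\<^sup>2) * integral\<^sup>L lborel Kf"
    unfolding Qplus_def G_def[symmetric] intG pw c_def by simp
  then show ?thesis using int1 int2 unfolding G_def Kf_def[abs_def] by simp
qed




theorem theorem2p1:
  fixes m m1 eps th1 :: real and u1 :: vec3 and f :: "vec3 \<times> vec3 \<Rightarrow> real"
  assumes "m > 0" and "m1 > 0" and "0 < eps" and "eps < 1" and "th1 > 0"
    and "integrable (density (lborel \<Otimes>\<^sub>M lborel) (\<lambda>(x, v). ennreal (coll_freq m1 th1 u1 v))) f"
  shows "AE (x, v) in (lborel \<Otimes>\<^sub>M lborel).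
           integrable (lborel \<Otimes>\<^sub>M sphere_measure) (gain_integrand m m1 eps th1 u1 f x v)
         \<and> integrable lborel (\<lambda>v'. kern m m1 eps th1 u1 v v' * f (x, v'))
         \<and> Qplus m m1 eps th1 u1 f x v
             = 1 / (2 * eps\<^sup>2 * (gamma_c m m1 eps)\<^sup>2)
               * (\<integral>v'. kern m m1 eps th1 u1 v v' * f (x, v') \<partial>lborel)"
proof -
  note m = assms(1) and m1 = assms(2) and e0 = assms(3) and e1 = assms(4) and th1 = assms(5)
  have dens: "(\<lambda>(x, v). ennreal (coll_freq m1 th1 u1 v)) = (\<lambda>p::vec3\<times>vec3. Sig m1 th1 u1 (snd p))"
    by (auto simp: Sig_coll[OF m1 th1])
  have hyp: "integrable (density (lborel \<Otimes>\<^sub>M lborel) (\<lambda>p. Sig m1 th1 u1 (snd p))) f"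
    using assms(6) unfolding dens .
  have fm[measurable]: "f \<in> borel_measurable (lborel \<Otimes>\<^sub>M lborel)"
    using borel_measurable_integrable[OF hyp] by simp
  have fin0: "(\<integral>\<^sup>+p. Sig m1 th1 u1 (snd p) * ennreal \<bar>f p\<bar> \<partial>(lborel \<Otimes>\<^sub>M lborel)) < \<infinity>"
  proof -
    have "(\<integral>\<^sup>+p. ennreal (norm (f p)) \<partial>density (lborel \<Otimes>\<^sub>M lborel) (\<lambda>p. Sig m1 th1 u1 (snd p))) < \<infinity>"
      using hyp unfolding integrable_iff_bounded by simp
    then show ?thesis by (subst (asm) nn_integral_density) auto
  qed
  define F where "F x v = (\<integral>\<^sup>+p. ennreal \<bar>(v - fst p) \<bullet> snd p\<bar> * ennreal \<bar>f (x, vstar m m1 eps v (fst p) (snd p))\<bar>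
              * ennreal (Maxw1 m1 th1 u1 (wstar m m1 eps v (fst p) (snd p))) \<partial>(lborel \<Otimes>\<^sub>M sphere_measure))" for x v
  interpret sf: sigma_finite_measure "(lborel::vec3 measure) \<Otimes>\<^sub>M sphere_measure" by (rule sf_lS)
  have Fm: "(\<lambda>p. F (fst p) (snd p)) \<in> borel_measurable (lborel \<Otimes>\<^sub>M lborel)"
    unfolding F_def vstar_def wstar_def by measurable
  have intF: "(\<integral>\<^sup>+p. F (fst p) (snd p) \<partial>(lborel \<Otimes>\<^sub>M lborel)) = ennreal (eps\<^sup>2) * (\<integral>\<^sup>+p. Sig m1 th1 u1 (snd p) * ennreal \<bar>f p\<bar> \<partial>(lborel \<Otimes>\<^sub>M lborel))"
  proof -
    have "(\<integral>\<^sup>+p. F (fst p) (snd p) \<partial>(lborel \<Otimes>\<^sub>M lborel)) = (\<integral>\<^sup>+x. (\<integral>\<^sup>+v. F x v \<partial>lborel) \<partial>lborel)"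
      using lborel.nn_integral_fst[OF Fm] by simp
    also have "\<dots> = (\<integral>\<^sup>+x. ennreal (eps\<^sup>2) * (\<integral>\<^sup>+v'. ennreal \<bar>f (x, v')\<bar> * Sig m1 th1 u1 v' \<partial>lborel) \<partial>lborel)"
      unfolding F_def by (intro nn_integral_cong lemmaD[OF m m1 e0 e1 th1]) measurable
    also have "\<dots> = ennreal (eps\<^sup>2) * (\<integral>\<^sup>+x. (\<integral>\<^sup>+v'. ennreal \<bar>f (x, v')\<bar> * Sig m1 th1 u1 v' \<partial>lborel) \<partial>lborel)"
      by (rule nn_integral_cmult) measurable
    also have "(\<integral>\<^sup>+x. (\<integral>\<^sup>+v'. ennreal \<bar>f (x, v')\<bar> * Sig m1 th1 u1 v' \<partial>lborel) \<partial>lborel)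
       = (\<integral>\<^sup>+p. Sig m1 th1 u1 (snd p) * ennreal \<bar>f p\<bar> \<partial>(lborel \<Otimes>\<^sub>M lborel))"
      by (subst lborel.nn_integral_fst[symmetric]) (auto simp: mult.commute)
    finally show ?thesis .
  qed
  have "(\<integral>\<^sup>+p. F (fst p) (snd p) \<partial>(lborel \<Otimes>\<^sub>M lborel)) \<noteq> \<infinity>"
    unfolding intF using fin0 by (simp add: ennreal_mult_eq_top_iff less_top)
  then have AEF: "AE p in lborel \<Otimes>\<^sub>M lborel. F (fst p) (snd p) \<noteq> \<infinity>"
    by (rule nn_integral_PInf_AE[OF Fm])
  show ?thesis using AEF
  proof (rule eventually_mono)
    fix p :: "vec3 \<times> vec3" assume "F (fst p) (snd p) \<noteq> \<infinity>"
    then show "case p of (x, v) \<Rightarrow>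
           integrable (lborel \<Otimes>\<^sub>M sphere_measure) (gain_integrand m m1 eps th1 u1 f x v)
         \<and> integrable lborel (\<lambda>v'. kern m m1 eps th1 u1 v v' * f (x, v'))
         \<and> Qplus m m1 eps th1 u1 f x v
             = 1 / (2 * eps\<^sup>2 * (gamma_c m m1 eps)\<^sup>2)
               * (\<integral>v'. kern m m1 eps th1 u1 v v' * f (x, v') \<partial>lborel)"
      by (cases p) (simp add: key[OF m m1 e0 e1 th1 fm] F_def)
  qed
qed


end
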